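(* Let $\Lambda$ be a finite $k$-graph without sources, $r\in\mathbb R^k$, $\beta\in\mathbb R$, let $\psi$ be a $\beta$-harmonic vector for $\alpha^r$, and let $F$ be well chosen. Then there exist a unique collection $\mathcal C$ of $F$-harmonic components and unique numbers $t_C\in(0,1]$, $C\in\mathcal C$, such that $\psi=\sum_{C\in\mathcal C}t_C\,x_F^C$. Furthermore, every $C\in\mathcal C$ is positive, satisfies $C\not\le C'$ for all $C'\in\mathcal C\setminus\{C\}$, satisfies $\beta r=(\ln\rho(A_1^C),\dots,\ln\rho(A_k^C))$, and $x_F^C$ is a $\beta$-harmonic vector for $\alpha^r$.
   Context: A $k$-graph $(\Lambda,d)$ is a countable small category with functor $d:\Lambda\to\mathbb N^k$ having the unique factorisation property (for $d(\lambda)=m+n$ there are unique $\mu,\nu$ with $d(\mu)=m,d(\nu)=n,\lambda=\mu\nu$). $\Lambda^0=d^{-1}(0)$ are the vertices, $\Lambda^n=d^{-1}(n)$, $r,s$ range and source, $v\Lambda^nw=\{\lambda\in\Lambda^n:r(\lambda)=v,s(\lambda)=w\}$, $v\Lambda w=\bigcup_nv\Lambda^nw$, and for $V,W\subseteq\Lambda^0$, $V\Lambda W=\bigcup_{v\in V,w\in W}v\Lambda w$. Finite: each $\Lambda^n$ finite; without sources: $v\Lambda^n\neq\emptyset$ for all $v,n$. Vertex matrices $A_i(v,w)=|v\Lambda^{e_i}w|$, $A^n=\prod_iA_i^{n_i}$. A $\beta$-harmonic vector for $\alpha^r$ is $\psi\in[0,\infty)^{\Lambda^0}$ with $\sum_v\psi_v=1$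 and $A_i\psi=e^{\beta r_i}\psi$ for $i=1,\dots,k$. Define $v\le w$ iff $v\Lambda w\ne\emptyset$ and $v\sim w$ iff $v\le w$ and $w\le v$; the classes are components, partially ordered by $C\le D$ iff $C\Lambda D\ne\emptyset$. A component $C$ is trivial if $C\Lambda C=\{v\}$ for a single vertex, non-trivial otherwise; positive if $\rho(A_i^C)>0$ for all $i$. $\overline V=\{w\in\Lambda^0:w\Lambda V\ne\emptyset\}$. For a matrix $B$ and $R,S\subseteq\Lambda^0$, $B^{R,S}$ is the submatrix with rows $R$, columns $S$, $B^S=B^{S,S}$; $\rho$ is spectral radius. For a finite sequence $F=(a_1,\dots,a_m)$ in $\mathbb N^k\setminus\{0\}$ (repetitions allowed), $A_F=\sum_jA^{a_j}$; $F$ is well chosen if $A_F(v,w)>0$ iff $v\Lambda^lw\ne\emptyset$ for some $l\ne0$. A non-trivial component $C$ is $F$-harmonic if $\overline C\setminus C=\emptyset$ or $\rho(A_F^C)>\rho(A_F^{\overline C\setminus C})$. For an $F$-harmonic $C$, $x_F^C$ is the unique vector in $[0,\infty)^{\Lambda^0}$ of unit $1$-norm with $A_Fx_F^C=\rho(A_F^C)x_F^C$ and $(x_F^C)_v=0$ for $v\notin\overline C$. *)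

theory Defs
  imports "HOL-Analysis.Analysis" "HOL-Library.Function_Algebras"
begin

text \<open>A k-graph is a countable small category (morphisms of type 'a) whose objects are
identified with their identity morphisms, together with a degree functor into N^k.
Elements of N^k are represented as functions nat => nat supported on {1..k}.\<close>

record 'a kgraph =
  mor  :: "'a set"
  deg  :: "'a \<Rightarrow> nat \<Rightarrow> nat"
  rng  :: "'a \<Rightarrow> 'a"
  src  :: "'a \<Rightarrow> 'a"
  comp :: "'a \<Rightarrow> 'a \<Rightarrow> 'a"

definition Nk :: "nat \<Rightarrow> (nat \<Rightarrow> nat) set" where
  "Nk k = {n. \<forall>i. i \<notin> {1..k} \<longrightarrow> n i = 0}"

definition unitv :: "nat \<Rightarrow> nat \<Rightarrow> nat" where
  "unitv i = (\<lambda>j. if j = i then 1 else 0)"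

definition verts :: "'a kgraph \<Rightarrow> 'a set" where
  "verts G = {p\<in>mor G. deg G p = 0}"

definition is_kgraph :: "nat \<Rightarrow> 'a kgraph \<Rightarrow> bool" where
  "is_kgraph k G \<longleftrightarrow>
     0 < k \<and> countable (mor G) \<and>
     (\<forall>p\<in>mor G. deg G p \<in> Nk k) \<and>
     (\<forall>p\<in>mor G. rng G p \<in> verts G \<and> src G p \<in> verts G) \<and>
     (\<forall>v\<in>verts G. rng G v = v \<and> src G v = v) \<and>
     (\<forall>\<mu>\<in>mor G. \<forall>\<nu>\<in>mor G. src G \<mu> = rng G \<nu> \<longrightarrow>
         comp G \<mu> \<nu> \<in> mor G \<and> rng G (comp G \<mu> \<nu>) = rng G \<mu> \<and>
         src G (comp G \<mu> \<nu>) = src G \<nu> \<and> deg G (comp G \<mu> \<nu>) = deg G \<mu> + deg G \<nu>) \<and>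
     (\<forall>p\<in>mor G. \<forall>\<mu>\<in>mor G. \<forall>\<nu>\<in>mor G. src G p = rng G \<mu> \<longrightarrow> src G \<mu> = rng G \<nu> \<longrightarrow>
         comp G (comp G p \<mu>) \<nu> = comp G p (comp G \<mu> \<nu>)) \<and>
     (\<forall>p\<in>mor G. comp G (rng G p) p = p \<and> comp G p (src G p) = p) \<and>
     (\<forall>p\<in>mor G. \<forall>m\<in>Nk k. \<forall>n\<in>Nk k. deg G p = m + n \<longrightarrow>
         (\<exists>!q. fst q \<in> mor G \<and> snd q \<in> mor G \<and> deg G (fst q) = m \<and> deg G (snd q) = n \<and>
               src G (fst q) = rng G (snd q) \<and> comp G (fst q) (snd q) = p))"

definition paths :: "'a kgraph \<Rightarrow> (nat \<Rightarrow> nat) \<Rightarrow> 'a \<Rightarrow> 'a \<Rightarrow> 'a set" where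
  "paths G n v w = {p\<in>mor G. deg G p = n \<and> rng G p = v \<and> src G p = w}"

definition finite_kgraph :: "nat \<Rightarrow> 'a kgraph \<Rightarrow> bool" where
  "finite_kgraph k G \<longleftrightarrow> (\<forall>n\<in>Nk k. finite {p\<in>mor G. deg G p = n})"

definition no_sources :: "nat \<Rightarrow> 'a kgraph \<Rightarrow> bool" where
  "no_sources k G \<longleftrightarrow> (\<forall>v\<in>verts G. \<forall>n\<in>Nk k. \<exists>p\<in>mor G. rng G p = v \<and> deg G p = n)"

type_synonym 'a vmat = "'a \<Rightarrow> 'a \<Rightarrow> real"

definition mmult :: "'a set \<Rightarrow> 'a vmat \<Rightarrow> 'a vmat \<Rightarrow> 'a vmat" where
  "mmult V A B = (\<lambda>v w. \<Sum>u\<in>V. A v u * B u w)"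

definition mone :: "'a vmat" where
  "mone = (\<lambda>v w. if v = w then 1 else 0)"

primrec mpow :: "'a set \<Rightarrow> 'a vmat \<Rightarrow> nat \<Rightarrow> 'a vmat" where
  "mpow V A 0 = mone"
| "mpow V A (Suc m) = mmult V (mpow V A m) A"

definition vmatrix :: "'a kgraph \<Rightarrow> nat \<Rightarrow> 'a vmat" where
  "vmatrix G i = (\<lambda>v w. real (card (paths G (unitv i) v w)))"

definition vmatrix_pow :: "nat \<Rightarrow> 'a kgraph \<Rightarrow> (nat \<Rightarrow> nat) \<Rightarrow> 'a vmat" where
  "vmatrix_pow k G n =
     foldl (\<lambda>M i. mmult (verts G) M (mpow (verts G) (vmatrix G i) (n i))) mone [1..<Suc k]"

definition AF :: "nat \<Rightarrow> 'a kgraph \<Rightarrow> (nat \<Rightarrow> nat) list \<Rightarrow> 'a vmat" where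
  "AF k G F = (\<lambda>v w. \<Sum>a\<leftarrow>F. vmatrix_pow k G a v w)"

definition eigvals_on :: "'a set \<Rightarrow> 'a vmat \<Rightarrow> complex set" where
  "eigvals_on S B = {\<mu>. \<exists>x::'a \<Rightarrow> complex. (\<exists>v\<in>S. x v \<noteq> 0) \<and>
        (\<forall>v\<in>S. (\<Sum>w\<in>S. complex_of_real (B v w) * x w) = \<mu> * x v)}"

definition spec_rad :: "'a set \<Rightarrow> 'a vmat \<Rightarrow> real" where
  "spec_rad S B = Sup (cmod ` eigvals_on S B)"

text \<open>Vectors in [0,inf)^{Lambda^0} are functions vanishing off the vertex set.\<close>
definition harmonic_vec :: "nat \<Rightarrow> 'a kgraph \<Rightarrow> (nat \<Rightarrow> real) \<Rightarrow> real \<Rightarrow> ('a \<Rightarrow> real) \<Rightarrow> bool" where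
  "harmonic_vec k G r \<beta> \<psi> \<longleftrightarrow>
     (\<forall>v. v \<notin> verts G \<longrightarrow> \<psi> v = 0) \<and> (\<forall>v\<in>verts G. 0 \<le> \<psi> v) \<and>
     (\<Sum>v\<in>verts G. \<psi> v) = 1 \<and>
     (\<forall>i\<in>{1..k}. \<forall>v\<in>verts G.
        (\<Sum>w\<in>verts G. vmatrix G i v w * \<psi> w) = exp (\<beta> * r i) * \<psi> v)"

definition vle :: "'a kgraph \<Rightarrow> 'a \<Rightarrow> 'a \<Rightarrow> bool" where
  "vle G v w \<longleftrightarrow> (\<exists>p\<in>mor G. rng G p = v \<and> src G p = w)"

definition vequiv :: "'a kgraph \<Rightarrow> 'a \<Rightarrow> 'a \<Rightarrow> bool" where
  "vequiv G v w \<longleftrightarrow> vle G v w \<and> vle G w v"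

definition components :: "'a kgraph \<Rightarrow> 'a set set" where
  "components G = {C. \<exists>v\<in>verts G. C = {w\<in>verts G. vequiv G v w}}"

definition comp_le :: "'a kgraph \<Rightarrow> 'a set \<Rightarrow> 'a set \<Rightarrow> bool" where
  "comp_le G C D \<longleftrightarrow> (\<exists>v\<in>C. \<exists>w\<in>D. vle G v w)"

definition between :: "'a kgraph \<Rightarrow> 'a set \<Rightarrow> 'a set \<Rightarrow> 'a set" where
  "between G V W = {p\<in>mor G. rng G p \<in> V \<and> src G p \<in> W}"

definition trivial_comp :: "'a kgraph \<Rightarrow> 'a set \<Rightarrow> bool" where
  "trivial_comp G C \<longleftrightarrow> (\<exists>v. between G C C = {v})"

definition positive_comp :: "nat \<Rightarrow> 'a kgraph \<Rightarrow> 'a set \<Rightarrow> bool" where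
  "positive_comp k G C \<longleftrightarrow> (\<forall>i\<in>{1..k}. spec_rad C (vmatrix G i) > 0)"

definition upclosure :: "'a kgraph \<Rightarrow> 'a set \<Rightarrow> 'a set" where
  "upclosure G V = {w\<in>verts G. \<exists>v\<in>V. vle G w v}"

definition well_chosen :: "nat \<Rightarrow> 'a kgraph \<Rightarrow> (nat \<Rightarrow> nat) list \<Rightarrow> bool" where
  "well_chosen k G F \<longleftrightarrow>
     (\<forall>a\<in>set F. a \<in> Nk k \<and> a \<noteq> 0) \<and>
     (\<forall>v\<in>verts G. \<forall>w\<in>verts G.
        AF k G F v w > 0 \<longleftrightarrow> (\<exists>l\<in>Nk k. l \<noteq> 0 \<and> paths G l v w \<noteq> {}))"

definition F_harmonic :: "nat \<Rightarrow> 'a kgraph \<Rightarrow> (nat \<Rightarrow> nat) list \<Rightarrow> 'a set \<Rightarrow> bool" where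
  "F_harmonic k G F C \<longleftrightarrow>
     C \<in> components G \<and> \<not> trivial_comp G C \<and>
     (upclosure G C - C = {} \<or>
      spec_rad C (AF k G F) > spec_rad (upclosure G C - C) (AF k G F))"

definition xFC :: "nat \<Rightarrow> 'a kgraph \<Rightarrow> (nat \<Rightarrow> nat) list \<Rightarrow> 'a set \<Rightarrow> 'a \<Rightarrow> real" where
  "xFC k G F C = (THE x.
     (\<forall>v. v \<notin> verts G \<longrightarrow> x v = 0) \<and> (\<forall>v\<in>verts G. 0 \<le> x v) \<and>
     (\<Sum>v\<in>verts G. x v) = 1 \<and>
     (\<forall>v\<in>verts G. (\<Sum>w\<in>verts G. AF k G F v w * x w) = spec_rad C (AF k G F) * x v) \<and>
     (\<forall>v. v \<notin> upclosure G C \<longrightarrow> x v = 0))"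

end

theory Submission
  imports Defs
begin

lemma ratio_bound:
  fixes A :: "'a \<Rightarrow> 'a \<Rightarrow> real" and y :: "'a \<Rightarrow> complex"
  assumes fin: "finite D" and upos: "\<forall>v\<in>D. u v > 0" and Anon: "\<forall>v\<in>D. \<forall>w\<in>D. A v w \<ge> 0"
    and sup: "\<forall>v\<in>D. (\<Sum>w\<in>D. A v w * u w) \<le> l * u v"
    and eig: "\<forall>v\<in>D. (\<Sum>w\<in>D. complex_of_real (A v w) * y w) = \<mu> * y v"
    and nz: "\<exists>v\<in>D. y v \<noteq> 0"
  shows "cmod \<mu> \<le> l"
proof -
  define q where "q = (\<lambda>v. cmod (y v) / u v)"
  from nz obtain v1 where v1: "v1 \<in> D" "y v1 \<noteq> 0" by blast
  define m where "m = Max (q ` D)"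
  have Dne: "D \<noteq> {}" using v1 by blast
  have "m \<in> q ` D" unfolding m_def using fin Dne by simp
  then obtain v0 where v0: "v0 \<in> D" "q v0 = m" by auto
  have "q v1 > 0" using v1 upos unfolding q_def by auto
  moreover have "q v1 \<le> m" unfolding m_def using fin v1 by auto
  ultimately have mpos: "m > 0" by simp
  have bnd: "cmod (y w) \<le> m * u w" if "w \<in> D" for w
  proof -
    have "q w \<le> m" unfolding m_def using fin that by auto
    thus ?thesis using upos that unfolding q_def by (simp add: divide_le_eq)
  qed
  have yv0: "cmod (y v0) = m * u v0" using v0 upos unfolding q_def by auto
  have "cmod \<mu> * cmod (y v0) = cmod (\<Sum>w\<in>D. complex_of_real (A v0 w) * y w)"
    using eig v0 by (simp add: norm_mult)
  also have "\<dots> \<le> (\<Sum>w\<in>D. cmod (complex_of_real (A v0 w) * y w))" by (rule norm_sum)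
  also have "\<dots> = (\<Sum>w\<in>D. A v0 w * cmod (y w))"
    using Anon v0 by (intro sum.cong) (auto simp: norm_mult)
  also have "\<dots> \<le> (\<Sum>w\<in>D. A v0 w * (m * u w))"
    using Anon v0 bnd by (intro sum_mono mult_left_mono) auto
  also have "\<dots> = m * (\<Sum>w\<in>D. A v0 w * u w)" by (simp add: sum_distrib_left algebra_simps)
  also have "\<dots> \<le> m * (l * u v0)" using sup v0 mpos by (intro mult_left_mono) auto
  finally have "cmod \<mu> * (m * u v0) \<le> l * (m * u v0)" using yv0 by (simp add: algebra_simps)
  moreover have "m * u v0 > 0" using mpos upos v0 by auto
  ultimately show ?thesis using mult_le_cancel_right_pos by blast
qed

lemma irred_unique:
  fixes A :: "'a \<Rightarrow> 'a \<Rightarrow> real"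
  assumes fin: "finite C" and xpos: "\<forall>v\<in>C. x v > 0" and Anon: "\<forall>v\<in>C. \<forall>w\<in>C. A v w \<ge> 0"
    and offpos: "\<forall>v\<in>C. \<forall>w\<in>C. v \<noteq> w \<longrightarrow> A v w > 0"
    and xeig: "\<forall>v\<in>C. (\<Sum>w\<in>C. A v w * x w) = l * x v"
    and znn: "\<forall>v\<in>C. z v \<ge> 0"
    and zeig: "\<forall>v\<in>C. (\<Sum>w\<in>C. A v w * z w) = l * z v"
  shows "\<exists>c. \<forall>v\<in>C. z v = c * x v"
proof (cases "C = {}")
  case True then show ?thesis by auto
next
  case False
  define q where "q = (\<lambda>v. z v / x v)"
  define c where "c = Min (q ` C)"
  have "c \<in> q ` C" unfolding c_def using fin False by simp
  then obtain v0 where v0: "v0 \<in> C" "q v0 = c" by auto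
  define w where "w = (\<lambda>v. z v - c * x v)"
  have wnn: "w v \<ge> 0" if "v \<in> C" for v
  proof -
    have "c \<le> q v" unfolding c_def using fin that by auto
    thus ?thesis using xpos that unfolding q_def w_def by (simp add: le_divide_eq)
  qed
  have w0: "w v0 = 0" using v0 xpos unfolding w_def q_def by auto
  have "(\<Sum>u\<in>C. A v0 u * w u) = (\<Sum>u\<in>C. A v0 u * z u) - c * (\<Sum>u\<in>C. A v0 u * x u)"
    unfolding w_def by (simp add: algebra_simps sum_subtractf sum_distrib_left)
  also have "\<dots> = l * w v0" using xeig zeig v0 unfolding w_def by (simp add: algebra_simps)
  finally have "(\<Sum>u\<in>C. A v0 u * w u) = 0" using w0 by simp
  hence all0: "\<forall>u\<in>C. A v0 u * w u = 0"
    using sum_nonneg_eq_0_iff[OF fin, of "\<lambda>u. A v0 u * w u"] Anon v0 wnn by auto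
  have "z v = c * x v" if "v \<in> C" for v
  proof (cases "v = v0")
    case True then show ?thesis using w0 unfolding w_def by simp
  next
    case False
    then have "A v0 v > 0" using offpos v0 that by auto
    then have "w v = 0" using all0 that by auto
    then show ?thesis unfolding w_def by simp
  qed
  then show ?thesis by blast
qed

lemma finite_bw:
  fixes f :: "nat \<Rightarrow> 'a \<Rightarrow> real"
  assumes "finite I" and "\<forall>n. \<forall>i\<in>I. \<bar>f n i\<bar> \<le> M"
  shows "\<exists>h. strict_mono h \<and> (\<forall>i\<in>I. convergent (\<lambda>n. f (h n) i))"
  using assms
proof (induction I rule: finite_induct)
  case empty
  show ?case by (rule exI[of _ id]) (auto simp: strict_mono_def)
next
  case (insert i I)
  then obtain h where h: "strict_mono h" "\<forall>j\<in>I. convergent (\<lambda>n. f (h n) j)" by auto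
  obtain g where g: "strict_mono g" "monoseq (\<lambda>n. f (h (g n)) i)"
    using seq_monosub[of "\<lambda>n. f (h n) i"] by auto
  have "Bseq (\<lambda>n. f (h (g n)) i)"
    using insert.prems by (intro BseqI'[of _ M]) auto
  then have ci: "convergent (\<lambda>n. f (h (g n)) i)" using g Bseq_monoseq_convergent by blast
  have "convergent (\<lambda>n. f (h (g n)) j)" if "j \<in> I" for j
    using convergent_subseq_convergent[OF h(2)[rule_format, OF that] g(1)] by (simp add: o_def)
  moreover have "strict_mono (h \<circ> g)" using h g strict_mono_o by blast
  ultimately show ?case using ci by (intro exI[of _ "h \<circ> g"]) (auto simp: o_def)
qed

lemma pf_pos:
  fixes B :: "'a \<Rightarrow> 'a \<Rightarrow> real"
  assumes fin: "finite C" and ne: "C \<noteq> {}" and Bpos: "\<forall>v\<in>C. \<forall>w\<in>C. B v w > 0"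
  shows "\<exists>x s. (\<forall>v\<in>C. x v > 0) \<and> (\<Sum>v\<in>C. x v) = 1 \<and> (\<forall>v\<in>C. (\<Sum>w\<in>C. B v w * x w) = s * x v)"
proof -
  define Bx where "Bx x = (\<lambda>v. \<Sum>w\<in>C. B v w * x w)" for x :: "'a \<Rightarrow> real"
  define T where "T = {t. \<exists>x. (\<forall>v\<in>C. x v > 0) \<and> (\<forall>v\<in>C. t * x v \<le> Bx x v)}"
  define R where "R = (\<Sum>v\<in>C. \<Sum>w\<in>C. B v w)"
  have Bxpos: "Bx x v > 0" if "\<forall>v\<in>C. x v > 0" "v \<in> C" for x v
    unfolding Bx_def using that Bpos fin ne by (intro sum_pos) auto
  have Bxmono: "Bx x v \<le> Bx y v" if "\<forall>w\<in>C. x w \<le> y w" "v \<in> C" for x y v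
    unfolding Bx_def using that Bpos by (intro sum_mono mult_left_mono) (auto intro: less_imp_le)
  have T0: "0 \<in> T" unfolding T_def
    using Bxpos[of "\<lambda>_. 1"] by (intro CollectI exI[of _ "\<lambda>_. 1"]) (auto intro: less_imp_le)
  have Tbd: "t \<le> R" if tT: "t \<in> T" for t
  proof -
    obtain x where x: "\<forall>v\<in>C. x v > 0" "\<forall>v\<in>C. t * x v \<le> Bx x v" using tT unfolding T_def by auto
    have "Max (x ` C) \<in> x ` C" using fin ne by simp
    then obtain v0 where v0: "v0 \<in> C" "x v0 = Max (x ` C)" by auto
    have xle: "x w \<le> x v0" if "w \<in> C" for w using v0 fin that by auto
    have "t * x v0 \<le> Bx x v0" using x v0 by auto
    also have "\<dots> \<le> (\<Sum>w\<in>C. B v0 w * x v0)" unfolding Bx_def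
      using xle Bpos v0 by (intro sum_mono mult_left_mono) (auto intro: less_imp_le)
    also have "\<dots> = (\<Sum>w\<in>C. B v0 w) * x v0" by (simp add: sum_distrib_right)
    also have "\<dots> \<le> R * x v0"
    proof -
      have "(\<Sum>w\<in>C. B v0 w) \<le> R" unfolding R_def using fin v0 Bpos
        by (intro member_le_sum[of v0 C "\<lambda>v. \<Sum>w\<in>C. B v w"]) (auto intro: sum_nonneg less_imp_le)
      thus ?thesis using x v0 by (intro mult_right_mono) (auto intro: less_imp_le)
    qed
    finally have "t * x v0 \<le> R * x v0" .
    moreover have "x v0 > 0" using x v0 by auto
    ultimately show ?thesis using mult_le_cancel_right_pos by blast
  qed
  have bdd: "bdd_above T" by (intro bdd_aboveI[where M=R] Tbd)
  define s where "s = Sup T"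
  have Tne: "T \<noteq> {}" using T0 by auto
  have tles: "t \<le> s" if "t \<in> T" for t using cSup_upper[OF that bdd] s_def by simp
  define \<beta> where "\<beta> = Min ((\<lambda>(v,w). B v w) ` (C \<times> C))"
  define bM where "bM = Max ((\<lambda>(v,w). B v w) ` (C \<times> C))"
  have finCC: "finite ((\<lambda>(v,w). B v w) ` (C \<times> C))" using fin by auto
  have neCC: "(\<lambda>(v,w). B v w) ` (C \<times> C) \<noteq> {}" using ne by auto
  have \<beta>le: "\<beta> \<le> B v w" if "v \<in> C" "w \<in> C" for v w
    unfolding \<beta>_def using finCC that by (intro Min_le) force+
  have bMge: "B v w \<le> bM" if "v \<in> C" "w \<in> C" for v w
    unfolding bM_def using finCC that by (intro Max_ge) force+
  have \<beta>pos: "\<beta> > 0" unfolding \<beta>_def using finCC neCC Bpos by auto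
  have bMpos: "bM > 0" using \<beta>le bMge \<beta>pos ne by (meson all_not_in_conv less_le_trans)
  define \<delta> where "\<delta> = \<beta> / (real (card C) * bM)"
  have cardpos: "real (card C) > 0" using fin ne by (simp add: card_gt_0_iff)
  have \<delta>pos: "\<delta> > 0" unfolding \<delta>_def using \<beta>pos bMpos cardpos by simp
  have normal: "\<exists>z. (\<forall>v\<in>C. z v \<ge> \<delta> \<and> z v \<le> 1) \<and> (\<Sum>v\<in>C. z v) = 1 \<and> (\<forall>v\<in>C. t * z v \<le> Bx z v)"
    if x: "\<forall>v\<in>C. x v > 0" "\<forall>v\<in>C. t * x v \<le> Bx x v" for x t
  proof -
    define N where "N = (\<Sum>u\<in>C. Bx x u)"
    have Npos: "N > 0" unfolding N_def using Bxpos[OF x(1)] fin ne by (intro sum_pos) auto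
    define z where "z = (\<lambda>v. Bx x v / N)"
    have sx: "(\<Sum>w\<in>C. x w) > 0" using x fin ne by (intro sum_pos) auto
    have lo: "Bx x v \<ge> \<beta> * (\<Sum>w\<in>C. x w)" if "v \<in> C" for v
      unfolding Bx_def sum_distrib_left using \<beta>le that x by (intro sum_mono mult_right_mono) (auto intro: less_imp_le)
    have hi: "N \<le> real (card C) * bM * (\<Sum>w\<in>C. x w)"
    proof -
      have "N \<le> (\<Sum>u\<in>C. bM * (\<Sum>w\<in>C. x w))" unfolding N_def Bx_def sum_distrib_left
        using bMge x by (intro sum_mono mult_right_mono) (auto intro: less_imp_le)
      thus ?thesis by simp
    qed
    have zlo: "z v \<ge> \<delta>" if "v \<in> C" for v
    proof -
      have "\<delta> = (\<beta> * (\<Sum>w\<in>C. x w)) / (real (card C) * bM * (\<Sum>w\<in>C. x w))"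
        unfolding \<delta>_def using sx by simp
      also have "\<dots> \<le> Bx x v / N"
        using lo[OF that] hi Npos sx \<beta>pos Bxpos[OF x(1) that]
        by (intro frac_le) (auto intro: mult_nonneg_nonneg less_imp_le)
      finally show ?thesis unfolding z_def .
    qed
    have zhi: "z v \<le> 1" if "v \<in> C" for v
    proof -
      have "Bx x v \<le> N" unfolding N_def using fin that Bxpos[OF x(1)]
        by (intro member_le_sum) (auto intro: less_imp_le)
      thus ?thesis unfolding z_def using Npos by simp
    qed
    have zsum: "(\<Sum>v\<in>C. z v) = 1" unfolding z_def N_def using Npos N_def by (simp add: sum_divide_distrib[symmetric])
    have zeig: "t * z v \<le> Bx z v" if "v \<in> C" for v
    proof -
      have "Bx z v = (\<Sum>w\<in>C. B v w * (Bx x w / N))" unfolding Bx_def[of z] by (simp add: z_def)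
      also have "\<dots> = (\<Sum>w\<in>C. B v w * Bx x w) / N"
        by (simp only: sum_divide_distrib times_divide_eq_right)
      also have "\<dots> \<ge> (\<Sum>w\<in>C. B v w * (t * x w)) / N"
        using Npos x Bpos that by (intro divide_right_mono sum_mono mult_left_mono) (auto intro: less_imp_le)
      finally have "Bx z v \<ge> t * Bx x v / N" unfolding Bx_def by (simp add: sum_distrib_left algebra_simps)
      thus ?thesis unfolding z_def by simp
    qed
    show ?thesis using zlo zhi zsum zeig by (intro exI[of _ z]) auto
  qed
  have "\<forall>n::nat. \<exists>t z. s - 1 / (real n + 1) < t \<and> t \<le> s \<and> (\<forall>v\<in>C. z v \<ge> \<delta> \<and> z v \<le> 1) \<and> (\<Sum>v\<in>C. z v) = 1 \<and> (\<forall>v\<in>C. t * z v \<le> Bx z v)"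
  proof
    fix n :: nat
    have "s - 1 / (real n + 1) < Sup T" unfolding s_def by simp
    then obtain t where t: "t \<in> T" "s - 1 / (real n + 1) < t" using less_cSupE[OF _ Tne] by blast
    then obtain x where "\<forall>v\<in>C. x v > 0" "\<forall>v\<in>C. t * x v \<le> Bx x v" unfolding T_def by auto
    from normal[OF this] t tles show "\<exists>t z. s - 1 / (real n + 1) < t \<and> t \<le> s \<and> (\<forall>v\<in>C. z v \<ge> \<delta> \<and> z v \<le> 1) \<and> (\<Sum>v\<in>C. z v) = 1 \<and> (\<forall>v\<in>C. t * z v \<le> Bx z v)"
      by blast
  qed
  then obtain tt zz where ttz: "\<And>n. s - 1 / (real n + 1) < tt n" "\<And>n. tt n \<le> s"
    "\<And>n v. v \<in> C \<Longrightarrow> zz n v \<ge> \<delta> \<and> zz n v \<le> 1" "\<And>n. (\<Sum>v\<in>C. zz n v) = 1"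
    "\<And>n v. v \<in> C \<Longrightarrow> tt n * zz n v \<le> Bx (zz n) v"
    by metis
  obtain h where h: "strict_mono h" "\<forall>v\<in>C. convergent (\<lambda>n. zz (h n) v)"
  proof -
    have "\<forall>n. \<forall>i\<in>C. \<bar>zz n i\<bar> \<le> 1"
    proof (intro allI ballI)
      fix n i assume "i \<in> C"
      with ttz(3)[OF this, of n] \<delta>pos show "\<bar>zz n i\<bar> \<le> 1" by auto
    qed
    from finite_bw[OF fin this] show ?thesis using that by blast
  qed
  define zs where "zs v = lim (\<lambda>n. zz (h n) v)" for v
  have zslim: "(\<lambda>n. zz (h n) v) \<longlonglongrightarrow> zs v" if "v \<in> C" for v
    using h(2) that unfolding zs_def by (simp add: convergent_LIMSEQ_iff)
  have ttlim: "(\<lambda>n. tt (h n)) \<longlonglongrightarrow> s"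
  proof (rule tendsto_sandwich[of "\<lambda>n. s - 1 / (real (h n) + 1)" _ _ "\<lambda>n. s"])
    show "\<forall>\<^sub>F n in sequentially. s - 1 / (real (h n) + 1) \<le> tt (h n)"
      by (intro always_eventually allI less_imp_le ttz(1))
    show "\<forall>\<^sub>F n in sequentially. tt (h n) \<le> s" by (intro always_eventually allI ttz(2))
    show "(\<lambda>n. s) \<longlonglongrightarrow> s" by simp
    have "(\<lambda>n. s - 1 / (real n + 1)) \<longlonglongrightarrow> s - 0"
    proof (intro tendsto_diff tendsto_const)
      show "(\<lambda>n. 1 / (real n + 1)) \<longlonglongrightarrow> 0"
        using LIMSEQ_inverse_real_of_nat by (simp add: inverse_eq_divide add.commute)
    qed
    then show "(\<lambda>n. s - 1 / (real (h n) + 1)) \<longlonglongrightarrow> s"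
      using LIMSEQ_subseq_LIMSEQ[OF _ h(1)] by (simp add: o_def)
  qed
  have zsge: "zs v \<ge> \<delta>" if "v \<in> C" for v
    using zslim[OF that] ttz(3)[OF that] by (intro LIMSEQ_le_const) auto
  have zspos: "\<forall>v\<in>C. zs v > 0" using zsge \<delta>pos by (meson less_le_trans)
  have zssum: "(\<Sum>v\<in>C. zs v) = 1"
  proof -
    have "(\<lambda>n. \<Sum>v\<in>C. zz (h n) v) \<longlonglongrightarrow> (\<Sum>v\<in>C. zs v)" by (intro tendsto_sum zslim)
    then show ?thesis using ttz(4) by (simp add: LIMSEQ_const_iff)
  qed
  have Bxlim: "(\<lambda>n. Bx (zz (h n)) v) \<longlonglongrightarrow> Bx zs v" for v
    unfolding Bx_def by (intro tendsto_sum tendsto_mult tendsto_const zslim) 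
  have zsineq: "s * zs v \<le> Bx zs v" if "v \<in> C" for v
    using that by (intro LIMSEQ_le[OF tendsto_mult[OF ttlim zslim[OF that]] Bxlim]) (auto intro: ttz(5))
  show ?thesis
  proof (cases "\<forall>v\<in>C. Bx zs v = s * zs v")
    case True
    then show ?thesis using zspos zssum unfolding Bx_def by blast
  next
    case False
    then obtain v1 where v1a: "v1 \<in> C" "Bx zs v1 \<noteq> s * zs v1" by blast
    have v1: "v1 \<in> C" "Bx zs v1 > s * zs v1" using v1a zsineq[OF v1a(1)] by auto
    define q where "q = Bx zs"
    have qpos: "\<forall>v\<in>C. q v > 0" unfolding q_def using Bxpos[OF zspos] by auto
    have gap: "Bx q v - s * q v > 0" if "v \<in> C" for v
    proof -
      have nn: "B v w * (Bx zs w - s * zs w) \<ge> 0" if "w \<in> C" for w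
      proof -
        have "B v w \<ge> 0" using Bpos \<open>v \<in> C\<close> that by (simp add: less_imp_le)
        moreover have "Bx zs w - s * zs w \<ge> 0" using zsineq[OF that] by simp
        ultimately show ?thesis by simp
      qed
      have "Bx q v - s * q v = (\<Sum>w\<in>C. B v w * (Bx zs w - s * zs w))"
        unfolding q_def Bx_def by (simp add: algebra_simps sum_subtractf sum_distrib_left)
      also have "\<dots> \<ge> B v v1 * (Bx zs v1 - s * zs v1)"
        using fin v1 nn
        by (intro member_le_sum[of v1 C "\<lambda>w. B v w * (Bx zs w - s * zs w)"]) (auto intro: mult_nonneg_nonneg less_imp_le)
      moreover have "B v v1 * (Bx zs v1 - s * zs v1) > 0" using Bpos v1 that by auto
      ultimately show ?thesis by linarith
    qed
    define \<epsilon> where "\<epsilon> = Min ((\<lambda>v. (Bx q v - s * q v) / q v) ` C)"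
    have \<epsilon>pos: "\<epsilon> > 0" unfolding \<epsilon>_def using fin ne gap qpos by auto
    have "(s + \<epsilon>) * q v \<le> Bx q v" if "v \<in> C" for v
    proof -
      have "\<epsilon> \<le> (Bx q v - s * q v) / q v" unfolding \<epsilon>_def using fin that by auto
      then have "\<epsilon> * q v \<le> Bx q v - s * q v" using qpos that by (simp add: le_divide_eq)
      then show ?thesis by (simp add: algebra_simps)
    qed
    then have "s + \<epsilon> \<in> T" unfolding T_def using qpos by auto
    then have "s + \<epsilon> \<le> s" by (rule tles)
    then show ?thesis using \<epsilon>pos by simp
  qed
qed

lemma nonneg_dichotomy:
  fixes A :: "'a \<Rightarrow> 'a \<Rightarrow> real"
  assumes fin: "finite D" and ne: "D \<noteq> {}" and Anon: "\<forall>v\<in>D. \<forall>w\<in>D. A v w \<ge> 0"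
  shows "(\<exists>u l'. l' < l \<and> (\<forall>v\<in>D. u v > 0) \<and> (\<forall>v\<in>D. (\<Sum>w\<in>D. A v w * u w) \<le> l' * u v)) \<or>
         (\<exists>x r. r \<ge> l \<and> (\<forall>v\<in>D. x v \<ge> 0) \<and> (\<Sum>v\<in>D. x v) = 1 \<and> (\<forall>v\<in>D. (\<Sum>w\<in>D. A v w * x w) = r * x v))"
proof -
  { assume nP: "\<not> (\<exists>u l'. l' < l \<and> (\<forall>v\<in>D. u v > 0) \<and> (\<forall>v\<in>D. (\<Sum>w\<in>D. A v w * u w) \<le> l' * u v))"
  define B where "B n v w = A v w + 1 / (real n + 1)" for n :: nat and v w
  have "\<forall>n. \<exists>x s. (\<forall>v\<in>D. x v > 0) \<and> (\<Sum>v\<in>D. x v) = 1 \<and> (\<forall>v\<in>D. (\<Sum>w\<in>D. B n v w * x w) = s * x v)"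
  proof
    fix n
    have "\<forall>v\<in>D. \<forall>w\<in>D. B n v w > 0" unfolding B_def using Anon
      by (auto intro: add_nonneg_pos)
    from pf_pos[OF fin ne this] show "\<exists>x s. (\<forall>v\<in>D. x v > 0) \<and> (\<Sum>v\<in>D. x v) = 1 \<and> (\<forall>v\<in>D. (\<Sum>w\<in>D. B n v w * x w) = s * x v)" .
  qed
  then obtain xx ss where xx: "\<And>n v. v \<in> D \<Longrightarrow> xx n v > 0" "\<And>n. (\<Sum>v\<in>D. xx n v) = 1"
    "\<And>n v. v \<in> D \<Longrightarrow> (\<Sum>w\<in>D. B n v w * xx n w) = ss n * xx n v"
    by metis
  have xle1: "xx n v \<le> 1" if "v \<in> D" for n v
    using member_le_sum[of v D "xx n"] that fin xx(1) xx(2) by (auto intro: less_imp_le)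
  have ssl: "ss n \<ge> l" for n
  proof (rule ccontr)
    assume "\<not> ss n \<ge> l"
    then have "ss n < l" by simp
    moreover have "\<forall>v\<in>D. (\<Sum>w\<in>D. A v w * xx n w) \<le> ss n * xx n v"
    proof
      fix v assume v: "v \<in> D"
      have "(\<Sum>w\<in>D. A v w * xx n w) \<le> (\<Sum>w\<in>D. B n v w * xx n w)"
        unfolding B_def using xx(1) by (intro sum_mono mult_right_mono) (auto intro: less_imp_le)
      then show "(\<Sum>w\<in>D. A v w * xx n w) \<le> ss n * xx n v" using xx(3)[OF v] by simp
    qed
    ultimately show False using nP xx(1) by blast
  qed
  define R where "R = (\<Sum>v\<in>D. \<Sum>w\<in>D. A v w + 1)"
  have ssR: "ss n \<le> R" for n
  proof -
    have "ss n = (\<Sum>v\<in>D. ss n * xx n v)" using xx(2) by (simp add: sum_distrib_left[symmetric])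
    also have "\<dots> = (\<Sum>v\<in>D. \<Sum>w\<in>D. B n v w * xx n w)" using xx(3) by simp
    also have "\<dots> \<le> (\<Sum>v\<in>D. \<Sum>w\<in>D. A v w + 1)"
    proof (intro sum_mono)
      fix v w assume "v \<in> D" "w \<in> D"
      then have "B n v w \<le> A v w + 1" "B n v w \<ge> 0" "xx n w \<le> 1" "xx n w \<ge> 0"
        unfolding B_def using Anon xle1 xx(1) by (auto simp: less_imp_le divide_le_eq)
      then show "B n v w * xx n w \<le> A v w + 1" by (metis mult_left_le order_trans)
    qed
    finally show ?thesis unfolding R_def .
  qed
  have ssabs: "\<bar>ss n\<bar> \<le> \<bar>l\<bar> + \<bar>R\<bar>" for n using ssl[of n] ssR[of n] by linarith
  obtain g1 where g1: "strict_mono g1" "monoseq (\<lambda>n. ss (g1 n))" using seq_monosub[of ss] by auto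
  have "Bseq (\<lambda>n. ss (g1 n))" using ssabs by (intro BseqI'[of _ "\<bar>l\<bar> + \<bar>R\<bar>"]) auto
  then have c1: "convergent (\<lambda>n. ss (g1 n))" using g1 Bseq_monoseq_convergent by blast
  have "\<forall>n. \<forall>v\<in>D. \<bar>xx (g1 n) v\<bar> \<le> 1" using xle1 xx(1) by (auto simp: less_imp_le)
  from finite_bw[OF fin this] obtain h where h: "strict_mono h" "\<forall>v\<in>D. convergent (\<lambda>n. xx (g1 (h n)) v)" by blast
  define H where "H = g1 \<circ> h"
  have H: "strict_mono H" unfolding H_def using g1 h strict_mono_o by blast
  have "convergent (\<lambda>n. ss (H n))" using convergent_subseq_convergent[OF c1 h(1)] unfolding H_def by (simp add: o_def)
  then obtain r where r: "(\<lambda>n. ss (H n)) \<longlonglongrightarrow> r" by (auto simp: convergent_def)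
  define x where "x v = lim (\<lambda>n. xx (H n) v)" for v
  have xlim: "(\<lambda>n. xx (H n) v) \<longlonglongrightarrow> x v" if "v \<in> D" for v
    using h(2) that unfolding x_def H_def by (simp add: convergent_LIMSEQ_iff o_def)
  have epslim: "(\<lambda>n. 1 / (real (H n) + 1)) \<longlonglongrightarrow> 0"
  proof -
    have "(\<lambda>n. 1 / (real n + 1)) \<longlonglongrightarrow> 0"
      using LIMSEQ_inverse_real_of_nat by (simp add: inverse_eq_divide add.commute)
    from LIMSEQ_subseq_LIMSEQ[OF this H] show ?thesis by (simp add: o_def)
  qed
  have "r \<ge> l" using r ssl by (intro LIMSEQ_le_const) auto
  moreover have "\<forall>v\<in>D. x v \<ge> 0"
  proof
    fix v assume v: "v \<in> D"
    show "x v \<ge> 0" using xx(1)[OF v] by (intro LIMSEQ_le_const[OF xlim[OF v]]) (auto intro: less_imp_le)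
  qed
  moreover have "(\<Sum>v\<in>D. x v) = 1"
  proof -
    have "(\<lambda>n. \<Sum>v\<in>D. xx (H n) v) \<longlonglongrightarrow> (\<Sum>v\<in>D. x v)" by (intro tendsto_sum xlim)
    then show ?thesis using xx(2) by (simp add: LIMSEQ_const_iff)
  qed
  moreover have "\<forall>v\<in>D. (\<Sum>w\<in>D. A v w * x w) = r * x v"
  proof
    fix v assume v: "v \<in> D"
    have "(\<lambda>n. \<Sum>w\<in>D. B (H n) v w * xx (H n) w) \<longlonglongrightarrow> (\<Sum>w\<in>D. (A v w + 0) * x w)"
      unfolding B_def by (intro tendsto_sum tendsto_mult tendsto_add tendsto_const epslim xlim)
    moreover have "(\<lambda>n. \<Sum>w\<in>D. B (H n) v w * xx (H n) w) \<longlonglongrightarrow> r * x v"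
    proof -
      have "(\<lambda>n. ss (H n) * xx (H n) v) \<longlonglongrightarrow> r * x v" by (intro tendsto_mult r xlim v)
      then show ?thesis using xx(3)[OF v] by simp
    qed
    ultimately show "(\<Sum>w\<in>D. A v w * x w) = r * x v" using LIMSEQ_unique by fastforce
  qed
  ultimately have "\<exists>x r. r \<ge> l \<and> (\<forall>v\<in>D. x v \<ge> 0) \<and> (\<Sum>v\<in>D. x v) = 1 \<and> (\<forall>v\<in>D. (\<Sum>w\<in>D. A v w * x w) = r * x v)"
    by blast }
  then show ?thesis by blast
qed

primrec iter_sol :: "'a set \<Rightarrow> ('a \<Rightarrow> 'a \<Rightarrow> real) \<Rightarrow> ('a \<Rightarrow> real) \<Rightarrow> real \<Rightarrow> nat \<Rightarrow> 'a \<Rightarrow> real" where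
  "iter_sol D A c l 0 = (\<lambda>v. 0)"
| "iter_sol D A c l (Suc n) = (\<lambda>v. ((\<Sum>w\<in>D. A v w * iter_sol D A c l n w) + c v) / l)"

lemma mono_solve:
  fixes A :: "'a \<Rightarrow> 'a \<Rightarrow> real"
  assumes fin: "finite D" and Anon: "\<forall>v\<in>D. \<forall>w\<in>D. A v w \<ge> 0"
    and upos: "\<forall>v\<in>D. u v > 0" and sup: "\<forall>v\<in>D. (\<Sum>w\<in>D. A v w * u w) \<le> l' * u v"
    and ll: "l' < l" and cnn: "\<forall>v\<in>D. c v \<ge> 0"
  shows "\<exists>y. (\<forall>v\<in>D. y v \<ge> 0) \<and> (\<forall>v\<in>D. l * y v = (\<Sum>w\<in>D. A v w * y w) + c v)"
proof (cases "D = {}")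
  case True then show ?thesis by auto
next
  case False
  then obtain v0 where v0: "v0 \<in> D" by auto
  have "0 \<le> (\<Sum>w\<in>D. A v0 w * u w)" using Anon upos v0 by (intro sum_nonneg) (auto intro: less_imp_le)
  then have "0 \<le> l' * u v0" using sup v0 by (meson order_trans)
  then have l'nn: "l' \<ge> 0" using upos[rule_format, OF v0] by (simp add: zero_le_mult_iff)
  then have lpos: "l > 0" using ll by simp
  define Y where "Y = iter_sol D A c l"
  have Y0: "Y 0 = (\<lambda>v. 0)" unfolding Y_def by simp
  have YS: "Y (Suc n) v = ((\<Sum>w\<in>D. A v w * Y n w) + c v) / l" for n v unfolding Y_def by simp
  have Ynn: "\<forall>v\<in>D. Y n v \<ge> 0" for n
  proof (induction n)
    case 0 then show ?case by (simp add: Y0)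
  next
    case (Suc n)
    show ?case
    proof
      fix v assume v: "v \<in> D"
      have "0 \<le> (\<Sum>w\<in>D. A v w * Y n w)" using Anon Suc v by (intro sum_nonneg) auto
      then show "Y (Suc n) v \<ge> 0" unfolding YS using cnn v lpos by auto
    qed
  qed
  have Ymono: "\<forall>v\<in>D. Y n v \<le> Y (Suc n) v" for n
  proof (induction n)
    case 0 then show ?case using Ynn by (simp add: Y0)
  next
    case (Suc n)
    show ?case
    proof
      fix v assume v: "v \<in> D"
      have "(\<Sum>w\<in>D. A v w * Y n w) \<le> (\<Sum>w\<in>D. A v w * Y (Suc n) w)"
        using Anon Suc v by (intro sum_mono mult_left_mono) auto
      then show "Y (Suc n) v \<le> Y (Suc (Suc n)) v" unfolding YS[of n] YS[of "Suc n"] using lpos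
        by (intro divide_right_mono) auto
    qed
  qed
  define K where "K = Max ((\<lambda>v. c v / ((l - l') * u v)) ` D)"
  have Kge: "c v / ((l - l') * u v) \<le> K" if "v \<in> D" for v unfolding K_def using fin that by auto
  have Knn: "K \<ge> 0" using Kge[OF v0] cnn v0 upos ll by (meson divide_nonneg_pos mult_pos_pos order_trans diff_gt_0_iff_gt)
  have cK: "c v \<le> K * ((l - l') * u v)" if "v \<in> D" for v
    using Kge[OF that] upos that ll by (simp add: divide_le_eq)
  have Ybd: "\<forall>v\<in>D. Y n v \<le> K * u v" for n
  proof (induction n)
    case 0 then show ?case using Knn upos by (simp add: Y0 less_imp_le)
  next
    case (Suc n)
    show ?case
    proof
      fix v assume v: "v \<in> D"
      have "(\<Sum>w\<in>D. A v w * Y n w) \<le> (\<Sum>w\<in>D. A v w * (K * u w))"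
        using Anon Suc v by (intro sum_mono mult_left_mono) auto
      also have "\<dots> = K * (\<Sum>w\<in>D. A v w * u w)" by (simp add: sum_distrib_left algebra_simps)
      also have "\<dots> \<le> K * (l' * u v)" using sup v Knn by (intro mult_left_mono) auto
      finally have "(\<Sum>w\<in>D. A v w * Y n w) + c v \<le> K * (l' * u v) + K * ((l - l') * u v)"
        using cK[OF v] by linarith
      also have "\<dots> = l * (K * u v)" by (simp add: algebra_simps)
      finally show "Y (Suc n) v \<le> K * u v" unfolding YS using lpos by (simp add: divide_le_eq mult.commute)
    qed
  qed
  define y where "y v = lim (\<lambda>n. Y n v)" for v
  have ylim: "(\<lambda>n. Y n v) \<longlonglongrightarrow> y v" if v: "v \<in> D" for v
  proof -
    have "incseq (\<lambda>n. Y n v)" using Ymono v by (intro incseq_SucI) auto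
    moreover have "bdd_above (range (\<lambda>n. Y n v))" using Ybd v by (intro bdd_aboveI[where M="K * u v"]) auto
    ultimately have "convergent (\<lambda>n. Y n v)" using LIMSEQ_incseq_SUP convergent_def by blast
    then show ?thesis unfolding y_def by (simp add: convergent_LIMSEQ_iff)
  qed
  have "\<forall>v\<in>D. y v \<ge> 0"
  proof
    fix v assume v: "v \<in> D"
    show "y v \<ge> 0" using Ynn v by (intro LIMSEQ_le_const[OF ylim[OF v]]) auto
  qed
  moreover have "\<forall>v\<in>D. l * y v = (\<Sum>w\<in>D. A v w * y w) + c v"
  proof
    fix v assume v: "v \<in> D"
    have "(\<lambda>n. Y (Suc n) v) \<longlonglongrightarrow> y v" using ylim[OF v] by (rule LIMSEQ_Suc)
    moreover have "(\<lambda>n. Y (Suc n) v) \<longlonglongrightarrow> ((\<Sum>w\<in>D. A v w * y w) + c v) / l"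
      unfolding YS by (intro tendsto_divide tendsto_add tendsto_sum tendsto_mult tendsto_const ylim) (use lpos in auto)
    ultimately have "y v = ((\<Sum>w\<in>D. A v w * y w) + c v) / l" using LIMSEQ_unique by blast
    then show "l * y v = (\<Sum>w\<in>D. A v w * y w) + c v" using lpos by (simp add: field_simps)
  qed
  ultimately show ?thesis by blast
qed

lemma eig_bdd:
  fixes A :: "'a \<Rightarrow> 'a \<Rightarrow> real"
  assumes fin: "finite D" and Anon: "\<forall>v\<in>D. \<forall>w\<in>D. A v w \<ge> 0"
  shows "bdd_above (cmod ` eigvals_on D A)"
proof (rule bdd_aboveI[where M="\<Sum>v\<in>D. \<Sum>w\<in>D. A v w"])
  fix m assume "m \<in> cmod ` eigvals_on D A"
  then obtain \<mu> y where m: "m = cmod \<mu>" "\<exists>v\<in>D. y v \<noteq> 0"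
    "\<forall>v\<in>D. (\<Sum>w\<in>D. complex_of_real (A v w) * y w) = \<mu> * y v"
    unfolding eigvals_on_def by auto
  have "\<forall>v\<in>D. (\<Sum>w\<in>D. A v w * 1) \<le> (\<Sum>v\<in>D. \<Sum>w\<in>D. A v w) * 1"
  proof
    fix v assume "v \<in> D"
    then show "(\<Sum>w\<in>D. A v w * 1) \<le> (\<Sum>v\<in>D. \<Sum>w\<in>D. A v w) * 1"
      using fin Anon by (simp, intro member_le_sum[of v D "\<lambda>v. \<Sum>w\<in>D. A v w"]) (auto intro: sum_nonneg)
  qed
  from ratio_bound[OF fin _ Anon this m(3) m(2)] show "m \<le> (\<Sum>v\<in>D. \<Sum>w\<in>D. A v w)" using m(1) by simp
qed

lemma spec_rad_pos_eig:
  fixes A :: "'a \<Rightarrow> 'a \<Rightarrow> real"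
  assumes fin: "finite C" and ne: "C \<noteq> {}" and xpos: "\<forall>v\<in>C. x v > 0" and Anon: "\<forall>v\<in>C. \<forall>w\<in>C. A v w \<ge> 0"
    and eig: "\<forall>v\<in>C. (\<Sum>w\<in>C. A v w * x w) = l * x v"
  shows "spec_rad C A = l"
proof -
  have lnn: "l \<ge> 0"
  proof -
    obtain v where v: "v \<in> C" using ne by auto
    have "0 \<le> (\<Sum>w\<in>C. A v w * x w)" using Anon xpos v by (intro sum_nonneg) (auto intro: less_imp_le)
    then show ?thesis using eig v xpos[rule_format, OF v] by (simp add: zero_le_mult_iff)
  qed
  have mem: "complex_of_real l \<in> eigvals_on C A"
    unfolding eigvals_on_def
  proof (intro CollectI exI[of _ "\<lambda>v. complex_of_real (x v)"] conjI)
    show "\<exists>v\<in>C. complex_of_real (x v) \<noteq> 0" using ne xpos by force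
    show "\<forall>v\<in>C. (\<Sum>w\<in>C. complex_of_real (A v w) * complex_of_real (x w)) = complex_of_real l * complex_of_real (x v)"
      using eig by (simp flip: of_real_mult of_real_sum)
  qed
  have le: "cmod \<mu> \<le> l" if mu: "\<mu> \<in> eigvals_on C A" for \<mu>
  proof -
    obtain y where y: "\<exists>v\<in>C. y v \<noteq> 0" "\<forall>v\<in>C. (\<Sum>w\<in>C. complex_of_real (A v w) * y w) = \<mu> * y v"
      using mu unfolding eigvals_on_def by auto
    show ?thesis using ratio_bound[OF fin xpos Anon _ y(2) y(1)] eig by simp
  qed
  show ?thesis unfolding spec_rad_def
  proof (rule cSup_eq_maximum)
    show "l \<in> cmod ` eigvals_on C A" using mem lnn by (metis image_eqI norm_of_real abs_of_nonneg)
    show "\<And>y. y \<in> cmod ` eigvals_on C A \<Longrightarrow> y \<le> l" using le by auto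
  qed
qed

lemma real_eig_in:
  fixes A :: "'a \<Rightarrow> 'a \<Rightarrow> real"
  assumes "\<exists>v\<in>D. x v \<noteq> 0" "\<forall>v\<in>D. (\<Sum>w\<in>D. A v w * x w) = r * x v"
  shows "complex_of_real r \<in> eigvals_on D A"
  unfolding eigvals_on_def
proof (intro CollectI exI[of _ "\<lambda>v. complex_of_real (x v)"] conjI)
  show "\<exists>v\<in>D. complex_of_real (x v) \<noteq> 0" using assms by force
  show "\<forall>v\<in>D. (\<Sum>w\<in>D. complex_of_real (A v w) * complex_of_real (x w)) = complex_of_real r * complex_of_real (x v)"
    using assms by (simp flip: of_real_mult of_real_sum)
qed

lemma spec_rad_lt:
  fixes A :: "'a \<Rightarrow> 'a \<Rightarrow> real"
  assumes fin: "finite D" and ne: "D \<noteq> {}" and Anon: "\<forall>v\<in>D. \<forall>w\<in>D. A v w \<ge> 0"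
    and upos: "\<forall>v\<in>D. u v > 0" and sup: "\<forall>v\<in>D. (\<Sum>w\<in>D. A v w * u w) \<le> l' * u v"
  shows "spec_rad D A \<le> l'"
proof -
  have "\<exists>x r. r \<ge> 0 \<and> (\<forall>v\<in>D. x v \<ge> 0) \<and> (\<Sum>v\<in>D. x v) = 1 \<and> (\<forall>v\<in>D. (\<Sum>w\<in>D. A v w * x w) = r * x v)"
  proof -
    have "\<not> (\<exists>u l'. l' < 0 \<and> (\<forall>v\<in>D. u v > 0) \<and> (\<forall>v\<in>D. (\<Sum>w\<in>D. A v w * u w) \<le> l' * u v))"
    proof
      assume "\<exists>u l'. l' < 0 \<and> (\<forall>v\<in>D. u v > 0) \<and> (\<forall>v\<in>D. (\<Sum>w\<in>D. A v w * u w) \<le> l' * u v)"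
      then obtain u l' where h: "l' < 0" "\<forall>v\<in>D. u v > 0" "\<forall>v\<in>D. (\<Sum>w\<in>D. A v w * u w) \<le> l' * u v" by blast
      obtain v where v: "v \<in> D" using ne by auto
      have "0 \<le> (\<Sum>w\<in>D. A v w * u w)" using Anon h v by (intro sum_nonneg) (auto intro: less_imp_le)
      moreover have "l' * u v < 0" using h v by (simp add: mult_neg_pos)
      ultimately show False using h v by (meson le_less_trans not_less order_trans)
    qed
    then show ?thesis using nonneg_dichotomy[OF fin ne Anon, of 0] by blast
  qed
  then obtain x r where xr: "\<forall>v\<in>D. x v \<ge> 0" "(\<Sum>v\<in>D. x v) = 1" "\<forall>v\<in>D. (\<Sum>w\<in>D. A v w * x w) = r * x v" by blast
  have "\<exists>v\<in>D. x v \<noteq> 0" using xr(2) by (metis sum.neutral zero_neq_one)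
  from real_eig_in[OF this xr(3)] have ne2: "eigvals_on D A \<noteq> {}" by auto
  have le: "cmod \<mu> \<le> l'" if mu: "\<mu> \<in> eigvals_on D A" for \<mu>
  proof -
    obtain y where y: "\<exists>v\<in>D. y v \<noteq> 0" "\<forall>v\<in>D. (\<Sum>w\<in>D. complex_of_real (A v w) * y w) = \<mu> * y v"
      using mu unfolding eigvals_on_def by auto
    show ?thesis using ratio_bound[OF fin upos Anon sup y(2) y(1)] .
  qed
  show ?thesis unfolding spec_rad_def by (rule cSup_least) (use ne2 le in auto)
qed

lemma no_eigvec:
  fixes A :: "'a \<Rightarrow> 'a \<Rightarrow> real"
  assumes fin: "finite D" and Anon: "\<forall>v\<in>D. \<forall>w\<in>D. A v w \<ge> 0"
    and upos: "\<forall>v\<in>D. u v > 0" and sup: "\<forall>v\<in>D. (\<Sum>w\<in>D. A v w * u w) \<le> l' * u v"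
    and ll: "l' < l" and eig: "\<forall>v\<in>D. (\<Sum>w\<in>D. A v w * y w) = l * y v"
  shows "\<forall>v\<in>D. y v = 0"
proof (rule ccontr)
  assume "\<not> (\<forall>v\<in>D. y v = 0)"
  then have nz: "\<exists>v\<in>D. complex_of_real (y v) \<noteq> 0" by auto
  have "\<forall>v\<in>D. (\<Sum>w\<in>D. complex_of_real (A v w) * complex_of_real (y w)) = complex_of_real l * complex_of_real (y v)"
    using eig by (simp flip: of_real_mult of_real_sum)
  from ratio_bound[OF fin upos Anon sup this nz] have "\<bar>l\<bar> \<le> l'" by simp
  then show False using ll by simp
qed

lemma eigval_le_spec_rad:
  fixes A :: "'a \<Rightarrow> 'a \<Rightarrow> real"
  assumes fin: "finite D" and Anon: "\<forall>v\<in>D. \<forall>w\<in>D. A v w \<ge> 0"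
    and nz: "\<exists>v\<in>D. x v \<noteq> 0" and eig: "\<forall>v\<in>D. (\<Sum>w\<in>D. A v w * x w) = r * x v"
  shows "r \<le> spec_rad D A"
proof -
  have "cmod (complex_of_real r) \<le> spec_rad D A" unfolding spec_rad_def
    by (intro cSup_upper imageI real_eig_in[OF nz eig] eig_bdd[OF fin Anon])
  then show ?thesis by simp
qed

definition vapp :: "'a set \<Rightarrow> 'a vmat \<Rightarrow> ('a \<Rightarrow> real) \<Rightarrow> 'a \<Rightarrow> real" where
  "vapp V M x = (\<lambda>v. \<Sum>w\<in>V. M v w * x w)"

lemma vapp_cong: "(\<And>w. w \<in> V \<Longrightarrow> x w = y w) \<Longrightarrow> vapp V M x v = vapp V M y v"
  unfolding vapp_def by (intro sum.cong) auto

lemma vapp_mmult: "vapp V (mmult V M N) x v = vapp V M (vapp V N x) v"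
  unfolding vapp_def mmult_def
  by (simp add: sum_distrib_right sum_distrib_left algebra_simps) (rule sum.swap)

lemma vapp_mone: "finite V \<Longrightarrow> v \<in> V \<Longrightarrow> vapp V mone x v = x v"
  unfolding vapp_def mone_def by (simp add: if_distrib if_distribR sum.delta cong: if_cong)

lemma vapp_scale: "vapp V M (\<lambda>w. c * x w) v = c * vapp V M x v"
  unfolding vapp_def by (simp add: sum_distrib_left algebra_simps)

lemma vapp_diff: "vapp V M (\<lambda>w. x w - y w) v = vapp V M x v - vapp V M y v"
  unfolding vapp_def by (simp add: sum_subtractf algebra_simps)

lemma mmult_nonneg: "(\<And>v w. M v w \<ge> 0) \<Longrightarrow> (\<And>v w. N v w \<ge> 0) \<Longrightarrow> mmult V M N v w \<ge> 0"
  unfolding mmult_def by (intro sum_nonneg mult_nonneg_nonneg) auto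

lemma mone_nonneg: "mone v w \<ge> (0::real)" unfolding mone_def by simp

lemma mpow_nonneg: "(\<And>v w. M v w \<ge> 0) \<Longrightarrow> mpow V M m v w \<ge> 0"
  by (induction m arbitrary: v w) (auto intro: mmult_nonneg mone_nonneg)

lemma foldl_nonneg:
  "(\<And>v w. M0 v w \<ge> 0) \<Longrightarrow> (\<And>i v w. P i v w \<ge> 0) \<Longrightarrow> foldl (\<lambda>M i. mmult V M (P i)) M0 is v w \<ge> 0"
proof (induction "is" arbitrary: M0)
  case Nil then show ?case by simp
next
  case (Cons a "is")
  have "\<And>v w. mmult V M0 (P a) v w \<ge> 0" using Cons.prems by (intro mmult_nonneg) auto
  then show ?case using Cons by simp
qed

lemma mpow_eig:
  assumes "finite V" "\<forall>u\<in>V. vapp V M x u = c * x u"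
  shows "\<forall>v\<in>V. vapp V (mpow V M m) x v = c ^ m * x v"
proof (induction m)
  case 0 then show ?case using assms by (simp add: vapp_mone)
next
  case (Suc m)
  show ?case
  proof
    fix v assume v: "v \<in> V"
    have "vapp V (mpow V M (Suc m)) x v = vapp V (mpow V M m) (vapp V M x) v" by (simp add: vapp_mmult)
    also have "\<dots> = vapp V (mpow V M m) (\<lambda>w. c * x w) v" using assms by (intro vapp_cong) auto
    also have "\<dots> = c * (c ^ m * x v)" using Suc v by (simp add: vapp_scale)
    finally show "vapp V (mpow V M (Suc m)) x v = c ^ Suc m * x v" by simp
  qed
qed

lemma foldl_eig:
  assumes "\<forall>i\<in>set is. \<forall>u\<in>V. vapp V (P i) x u = c i * x u"
  shows "\<forall>v\<in>V. vapp V (foldl (\<lambda>M i. mmult V M (P i)) M0 is) x v = (\<Prod>i\<leftarrow>is. c i) * vapp V M0 x v"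
  using assms
proof (induction "is" arbitrary: M0)
  case Nil then show ?case by simp
next
  case (Cons i "is")
  show ?case
  proof
    fix v assume v: "v \<in> V"
    have "vapp V (foldl (\<lambda>M i. mmult V M (P i)) M0 (i # is)) x v
        = (\<Prod>i\<leftarrow>is. c i) * vapp V (mmult V M0 (P i)) x v" using Cons v by simp
    also have "vapp V (mmult V M0 (P i)) x v = vapp V M0 (\<lambda>w. c i * x w) v"
      unfolding vapp_mmult using Cons.prems by (intro vapp_cong) auto
    finally show "vapp V (foldl (\<lambda>M i. mmult V M (P i)) M0 (i # is)) x v = (\<Prod>i\<leftarrow>i # is. c i) * vapp V M0 x v"
      by (simp add: vapp_scale)
  qed
qed

definition comm :: "'a set \<Rightarrow> 'a vmat \<Rightarrow> 'a vmat \<Rightarrow> bool" where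
  "comm V M N \<longleftrightarrow> (\<forall>x. \<forall>v\<in>V. vapp V M (vapp V N x) v = vapp V N (vapp V M x) v)"

lemma comm_mone: "finite V \<Longrightarrow> comm V X mone"
  unfolding comm_def
proof (intro allI ballI)
  fix x v assume "finite V" "v \<in> V"
  then show "vapp V X (vapp V mone x) v = vapp V mone (vapp V X x) v"
    by (simp add: vapp_mone cong: vapp_cong)
qed

lemma comm_mmult: "comm V X M \<Longrightarrow> comm V X N \<Longrightarrow> comm V X (mmult V M N)"
  unfolding comm_def
proof (intro allI ballI)
  fix x v assume M: "\<forall>x. \<forall>v\<in>V. vapp V X (vapp V M x) v = vapp V M (vapp V X x) v"
    and N: "\<forall>x. \<forall>v\<in>V. vapp V X (vapp V N x) v = vapp V N (vapp V X x) v" and v: "v \<in> V"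
  have "vapp V X (vapp V (mmult V M N) x) v = vapp V X (vapp V M (vapp V N x)) v"
    by (intro vapp_cong) (simp add: vapp_mmult)
  also have "\<dots> = vapp V M (vapp V X (vapp V N x)) v" using M v by auto
  also have "\<dots> = vapp V M (vapp V N (vapp V X x)) v" using N by (intro vapp_cong) auto
  finally show "vapp V X (vapp V (mmult V M N) x) v = vapp V (mmult V M N) (vapp V X x) v"
    by (simp add: vapp_mmult)
qed

lemma comm_mpow: "finite V \<Longrightarrow> comm V X M \<Longrightarrow> comm V X (mpow V M m)"
  by (induction m) (auto intro: comm_mmult comm_mone)

lemma comm_foldl: "comm V X M0 \<Longrightarrow> (\<forall>i\<in>set is. comm V X (P i)) \<Longrightarrow> comm V X (foldl (\<lambda>M i. mmult V M (P i)) M0 is)"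
  by (induction "is" arbitrary: M0) (auto intro: comm_mmult)

lemma vapp_sum_list_mat:
  "vapp V (\<lambda>v w. \<Sum>a\<leftarrow>L. P a v w) x v = (\<Sum>a\<leftarrow>L. vapp V (P a) x v)"
  unfolding vapp_def by (induction L) (auto simp: algebra_simps sum.distrib)

lemma vapp_sum_list_vec:
  "vapp V M (\<lambda>u. \<Sum>a\<leftarrow>L. f a u) v = (\<Sum>a\<leftarrow>L. vapp V M (f a) v)"
  unfolding vapp_def by (induction L) (auto simp: algebra_simps sum.distrib)

lemma comm_sum_list: "(\<forall>a\<in>set L. comm V X (P a)) \<Longrightarrow> comm V X (\<lambda>v w. \<Sum>a\<leftarrow>L. P a v w)"
  unfolding comm_def
proof (intro allI ballI)
  fix x v assume h: "\<forall>a\<in>set L. \<forall>x. \<forall>v\<in>V. vapp V X (vapp V (P a) x) v = vapp V (P a) (vapp V X x) v"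
    and v: "v \<in> V"
  have "vapp V X (vapp V (\<lambda>v w. \<Sum>a\<leftarrow>L. P a v w) x) v = vapp V X (\<lambda>u. \<Sum>a\<leftarrow>L. vapp V (P a) x u) v"
    by (intro vapp_cong) (simp add: vapp_sum_list_mat)
  also have "\<dots> = (\<Sum>a\<leftarrow>L. vapp V X (vapp V (P a) x) v)" by (rule vapp_sum_list_vec)
  also have "\<dots> = (\<Sum>a\<leftarrow>L. vapp V (P a) (vapp V X x) v)"
    using h v by (intro arg_cong[where f=sum_list] map_cong) auto
  finally show "vapp V X (vapp V (\<lambda>v w. \<Sum>a\<leftarrow>L. P a v w) x) v = vapp V (\<lambda>v w. \<Sum>a\<leftarrow>L. P a v w) (vapp V X x) v"
    by (simp add: vapp_sum_list_mat)
qed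

lemma comm_entry: "(\<And>v w. v \<in> V \<Longrightarrow> mmult V M N v w = mmult V N M v w) \<Longrightarrow> comm V M N"
  unfolding comm_def
proof (intro allI ballI)
  fix x v assume h: "\<And>v w. v \<in> V \<Longrightarrow> mmult V M N v w = mmult V N M v w" and v: "v \<in> V"
  have "vapp V M (vapp V N x) v = vapp V (mmult V M N) x v" by (simp add: vapp_mmult)
  also have "\<dots> = vapp V (mmult V N M) x v" unfolding vapp_def using h v by simp
  finally show "vapp V M (vapp V N x) v = vapp V N (vapp V M x) v" by (simp add: vapp_mmult)
qed

lemma comm_sym: "comm V M N \<Longrightarrow> comm V N M" unfolding comm_def by auto

locale kgwc =
  fixes k :: nat and G :: "'a kgraph" and F :: "(nat \<Rightarrow> nat) list"
  assumes kg: "is_kgraph k G" and fk: "finite_kgraph k G" and wc: "well_chosen k G F"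
begin

abbreviation "V \<equiv> verts G"
abbreviation "A \<equiv> AF k G F"

lemma kpos: "0 < k" using kg unfolding is_kgraph_def by auto

lemma deg_Nk: "p \<in> mor G \<Longrightarrow> deg G p \<in> Nk k" using kg unfolding is_kgraph_def by auto

lemma rng_V: "p \<in> mor G \<Longrightarrow> rng G p \<in> V" using kg unfolding is_kgraph_def by auto
lemma src_V: "p \<in> mor G \<Longrightarrow> src G p \<in> V" using kg unfolding is_kgraph_def by auto

lemma V_mor: "v \<in> V \<Longrightarrow> v \<in> mor G \<and> deg G v = 0 \<and> rng G v = v \<and> src G v = v"
  using kg unfolding is_kgraph_def verts_def by auto

lemma comp_props: "\<mu> \<in> mor G \<Longrightarrow> \<nu> \<in> mor G \<Longrightarrow> src G \<mu> = rng G \<nu> \<Longrightarrow>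
   comp G \<mu> \<nu> \<in> mor G \<and> rng G (comp G \<mu> \<nu>) = rng G \<mu> \<and> src G (comp G \<mu> \<nu>) = src G \<nu> \<and> deg G (comp G \<mu> \<nu>) = deg G \<mu> + deg G \<nu>"
  using kg unfolding is_kgraph_def by blast

lemma factor: "p \<in> mor G \<Longrightarrow> m \<in> Nk k \<Longrightarrow> n \<in> Nk k \<Longrightarrow> deg G p = m + n \<Longrightarrow>
   (\<exists>!q. fst q \<in> mor G \<and> snd q \<in> mor G \<and> deg G (fst q) = m \<and> deg G (snd q) = n \<and>
               src G (fst q) = rng G (snd q) \<and> comp G (fst q) (snd q) = p)"
  using kg unfolding is_kgraph_def by blast

lemma zero_Nk: "0 \<in> Nk k" unfolding Nk_def by simp

lemma finV: "finite V"
proof -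
  have "V = {p \<in> mor G. deg G p = 0}" unfolding verts_def by simp
  then show ?thesis using fk zero_Nk unfolding finite_kgraph_def by simp
qed

lemma fin_paths: "finite (paths G n v w)"
proof (cases "n \<in> Nk k")
  case True
  then have "finite {p \<in> mor G. deg G p = n}" using fk unfolding finite_kgraph_def by simp
  then show ?thesis unfolding paths_def by (rule rev_finite_subset) auto
next
  case False
  then have "paths G n v w = {}" unfolding paths_def using deg_Nk by auto
  then show ?thesis by simp
qed

lemma card_paths_add:
  assumes m: "m \<in> Nk k" and n: "n \<in> Nk k"
  shows "card (paths G (m + n) v w) = (\<Sum>u\<in>V. card (paths G m v u) * card (paths G n u w))"
proof -
  define S where "S = (\<Union>u\<in>V. paths G m v u \<times> paths G n u w)"
  have cS: "card S = (\<Sum>u\<in>V. card (paths G m v u) * card (paths G n u w))"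
    unfolding S_def
  proof (subst card_UN_disjoint)
    show "finite V" by (rule finV)
    show "\<forall>i\<in>V. finite (paths G m v i \<times> paths G n i w)" using fin_paths by auto
    show "\<forall>i\<in>V. \<forall>j\<in>V. i \<noteq> j \<longrightarrow> (paths G m v i \<times> paths G n i w) \<inter> (paths G m v j \<times> paths G n j w) = {}"
      unfolding paths_def by auto
  qed (simp add: card_cartesian_product)
  have inj: "inj_on (\<lambda>(\<mu>,\<nu>). comp G \<mu> \<nu>) S"
  proof (rule inj_onI, clarify)
    fix \<mu> \<nu> \<mu>' \<nu>' assume s1: "(\<mu>, \<nu>) \<in> S" and s2: "(\<mu>', \<nu>') \<in> S" and eq: "comp G \<mu> \<nu> = comp G \<mu>' \<nu>'"
    have h1: "\<mu> \<in> mor G" "\<nu> \<in> mor G" "deg G \<mu> = m" "deg G \<nu> = n" "src G \<mu> = rng G \<nu>"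
      using s1 unfolding S_def paths_def by auto
    have h2: "\<mu>' \<in> mor G" "\<nu>' \<in> mor G" "deg G \<mu>' = m" "deg G \<nu>' = n" "src G \<mu>' = rng G \<nu>'"
      using s2 unfolding S_def paths_def by auto
    define p where "p = comp G \<mu> \<nu>"
    have pp: "p \<in> mor G" "deg G p = m + n" using comp_props[OF h1(1,2,5)] h1 unfolding p_def by auto
    from factor[OF pp(1) m n pp(2)] have "(\<mu>, \<nu>) = (\<mu>', \<nu>')"
      using h1 h2 eq unfolding p_def by (metis fst_conv snd_conv)
    then show "\<mu> = \<mu>' \<and> \<nu> = \<nu>'" by simp
  qed
  have img: "(\<lambda>(\<mu>,\<nu>). comp G \<mu> \<nu>) ` S = paths G (m + n) v w"
  proof
    show "(\<lambda>(\<mu>,\<nu>). comp G \<mu> \<nu>) ` S \<subseteq> paths G (m + n) v w"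
    proof clarify
      fix \<mu> \<nu> assume "(\<mu>, \<nu>) \<in> S"
      then have h1: "\<mu> \<in> mor G" "\<nu> \<in> mor G" "deg G \<mu> = m" "deg G \<nu> = n" "src G \<mu> = rng G \<nu>"
        "rng G \<mu> = v" "src G \<nu> = w"
        unfolding S_def paths_def by auto
      show "comp G \<mu> \<nu> \<in> paths G (m + n) v w" using comp_props[OF h1(1,2,5)] h1 unfolding paths_def by auto
    qed
    show "paths G (m + n) v w \<subseteq> (\<lambda>(\<mu>,\<nu>). comp G \<mu> \<nu>) ` S"
    proof
      fix p assume "p \<in> paths G (m + n) v w"
      then have p: "p \<in> mor G" "deg G p = m + n" "rng G p = v" "src G p = w" unfolding paths_def by auto
      from factor[OF p(1) m n p(2)] obtain q where q: "fst q \<in> mor G" "snd q \<in> mor G" "deg G (fst q) = m"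
        "deg G (snd q) = n" "src G (fst q) = rng G (snd q)" "comp G (fst q) (snd q) = p" by blast
      have cp: "rng G (comp G (fst q) (snd q)) = rng G (fst q)" "src G (comp G (fst q) (snd q)) = src G (snd q)"
        using comp_props[OF q(1,2,5)] by auto
      have "(fst q, snd q) \<in> paths G m v (src G (fst q)) \<times> paths G n (src G (fst q)) w"
        unfolding paths_def using q p cp by (auto simp: mem_Times_iff)
      then have "(fst q, snd q) \<in> S" unfolding S_def using src_V[OF q(1)] by blast
      then show "p \<in> (\<lambda>(\<mu>,\<nu>). comp G \<mu> \<nu>) ` S" using q(6) by force
    qed
  qed
  have "card (paths G (m + n) v w) = card S" using card_image[OF inj] img by simp
  then show ?thesis using cS by simp
qed

lemma unitv_Nk: "i \<in> {1..k} \<Longrightarrow> unitv i \<in> Nk k" unfolding unitv_def Nk_def by auto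

lemma vmatrix_comm:
  assumes "i \<in> {1..k}" "j \<in> {1..k}"
  shows "comm V (vmatrix G i) (vmatrix G j)"
proof (rule comm_entry)
  fix v w
  have "mmult V (vmatrix G i) (vmatrix G j) v w = real (card (paths G (unitv i + unitv j) v w))"
    unfolding mmult_def vmatrix_def using card_paths_add[OF unitv_Nk[OF assms(1)] unitv_Nk[OF assms(2)]]
    by (simp flip: of_nat_mult of_nat_sum)
  also have "\<dots> = real (card (paths G (unitv j + unitv i) v w))" by (simp add: add.commute)
  also have "\<dots> = mmult V (vmatrix G j) (vmatrix G i) v w"
    unfolding mmult_def vmatrix_def using card_paths_add[OF unitv_Nk[OF assms(2)] unitv_Nk[OF assms(1)]]
    by (simp flip: of_nat_mult of_nat_sum)
  finally show "mmult V (vmatrix G i) (vmatrix G j) v w = mmult V (vmatrix G j) (vmatrix G i) v w" .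
qed

lemma vmatrix_nonneg: "vmatrix G i v w \<ge> 0" unfolding vmatrix_def by simp

lemma vmatrix_pow_nonneg: "vmatrix_pow k G a v w \<ge> 0"
  unfolding vmatrix_pow_def by (intro foldl_nonneg mone_nonneg mpow_nonneg vmatrix_nonneg)

lemma A_nonneg: "A v w \<ge> 0"
  unfolding AF_def by (intro sum_list_nonneg) (auto intro: vmatrix_pow_nonneg)

lemma comm_vmatrix_pow: "i \<in> {1..k} \<Longrightarrow> comm V (vmatrix G i) (vmatrix_pow k G a)"
  unfolding vmatrix_pow_def
  by (intro comm_foldl comm_mone finV ballI comm_mpow) (auto intro: vmatrix_comm)

lemma comm_A: "i \<in> {1..k} \<Longrightarrow> comm V (vmatrix G i) A"
  unfolding AF_def by (intro comm_sum_list ballI comm_vmatrix_pow)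

end

context kgwc begin

lemma vle_refl: "v \<in> V \<Longrightarrow> vle G v v" unfolding vle_def using V_mor by blast

lemma vle_trans: "vle G a b \<Longrightarrow> vle G b c \<Longrightarrow> vle G a c"
  unfolding vle_def using comp_props by metis

lemma vle_V: "vle G a b \<Longrightarrow> a \<in> V \<and> b \<in> V" unfolding vle_def using rng_V src_V by blast

lemma vle_neq_path: assumes "vle G a b" "a \<noteq> b" shows "\<exists>l\<in>Nk k. l \<noteq> 0 \<and> paths G l a b \<noteq> {}"
proof -
  obtain p where p: "p \<in> mor G" "rng G p = a" "src G p = b" using assms unfolding vle_def by blast
  have "deg G p \<noteq> 0"
  proof
    assume "deg G p = 0"
    then have "p \<in> V" using p unfolding verts_def by simp
    then show False using V_mor p assms(2) by metis
  qed
  then show ?thesis using p deg_Nk unfolding paths_def by blast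
qed

lemma paths_vle: "paths G l a b \<noteq> {} \<Longrightarrow> vle G a b" unfolding paths_def vle_def by blast

lemma A_pos_iff: "v \<in> V \<Longrightarrow> w \<in> V \<Longrightarrow> A v w > 0 \<longleftrightarrow> (\<exists>l\<in>Nk k. l \<noteq> 0 \<and> paths G l v w \<noteq> {})"
  using wc unfolding well_chosen_def by blast

lemma A_pos_vle: "v \<in> V \<Longrightarrow> w \<in> V \<Longrightarrow> A v w > 0 \<Longrightarrow> vle G v w"
  using A_pos_iff paths_vle by blast

lemma A_vle_pos: "vle G v w \<Longrightarrow> v \<noteq> w \<Longrightarrow> A v w > 0"
  using A_pos_iff vle_neq_path vle_V by blast

lemma vmatrix_pos_vle: "vmatrix G i v w > 0 \<Longrightarrow> vle G v w"
proof -
  assume "vmatrix G i v w > 0"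
  then have "paths G (unitv i) v w \<noteq> {}" unfolding vmatrix_def by (metis card.empty of_nat_0 less_irrefl)
  then show ?thesis by (rule paths_vle)
qed

definition cls :: "'a \<Rightarrow> 'a set" where "cls v = {w\<in>V. vequiv G v w}"

lemma vequiv_sym: "vequiv G a b \<Longrightarrow> vequiv G b a" unfolding vequiv_def by auto
lemma vequiv_trans: "vequiv G a b \<Longrightarrow> vequiv G b c \<Longrightarrow> vequiv G a c" unfolding vequiv_def using vle_trans by blast

lemma comp_cls: assumes "C \<in> components G" "a \<in> C" shows "C = cls a"
proof -
  obtain v where v: "v \<in> V" "C = {w\<in>V. vequiv G v w}" using assms(1) unfolding components_def by auto
  have "vequiv G v a" using assms(2) v by auto
  then show ?thesis unfolding cls_def v(2) using vequiv_sym vequiv_trans by blast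
qed

lemma cls_comp: "v \<in> V \<Longrightarrow> cls v \<in> components G" unfolding cls_def components_def by auto
lemma cls_self: "v \<in> V \<Longrightarrow> v \<in> cls v" unfolding cls_def vequiv_def using vle_refl by auto

lemma comp_V: "C \<in> components G \<Longrightarrow> C \<subseteq> V" unfolding components_def by auto
lemma comp_ne: "C \<in> components G \<Longrightarrow> C \<noteq> {}" unfolding components_def using cls_self[unfolded cls_def] by auto
lemma comp_fin: "C \<in> components G \<Longrightarrow> finite C" using comp_V finV finite_subset by blast
lemma fin_components: "finite (components G)"
proof -
  have "components G \<subseteq> Pow V" using comp_V by auto
  then show ?thesis using finV by (meson finite_Pow_iff finite_subset)
qed

lemma comp_equiv: "C \<in> components G \<Longrightarrow> a \<in> C \<Longrightarrow> b \<in> C \<Longrightarrow> vequiv G a b"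
  using comp_cls unfolding cls_def by blast

lemma comp_closed: "C \<in> components G \<Longrightarrow> a \<in> C \<Longrightarrow> vequiv G a b \<Longrightarrow> b \<in> C"
  using comp_cls[of C a] vle_V unfolding cls_def vequiv_def by blast

lemma up_V: "upclosure G C \<subseteq> V" unfolding upclosure_def by auto

lemma C_up: "C \<in> components G \<Longrightarrow> C \<subseteq> upclosure G C"
  unfolding upclosure_def using comp_V vle_refl by blast

lemma row_C: assumes "C \<in> components G" "v \<in> C" "w \<in> upclosure G C" "vle G v w" shows "w \<in> C"
proof -
  obtain c where c: "c \<in> C" "vle G w c" using assms(3) unfolding upclosure_def by auto
  have "vle G c v" using comp_equiv[OF assms(1) c(1) assms(2)] unfolding vequiv_def by auto
  then have "vle G w v" using c vle_trans by blast
  then show ?thesis using comp_closed[OF assms(1,2)] assms(4) unfolding vequiv_def by blast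
qed

lemma row_out: assumes "v \<notin> upclosure G C" "w \<in> upclosure G C" "vle G v w" shows False
proof -
  obtain c where c: "c \<in> C" "vle G w c" using assms(2) unfolding upclosure_def by auto
  then have "vle G v c" using assms vle_trans by blast
  then show False using assms(1) c vle_V unfolding upclosure_def by blast
qed

lemma A_row_C: "C \<in> components G \<Longrightarrow> v \<in> C \<Longrightarrow> w \<in> upclosure G C \<Longrightarrow> w \<notin> C \<Longrightarrow> A v w = 0"
  using A_pos_vle row_C A_nonneg comp_V up_V by (metis less_eq_real_def subsetD)

lemma A_row_out: "v \<in> V \<Longrightarrow> v \<notin> upclosure G C \<Longrightarrow> w \<in> upclosure G C \<Longrightarrow> A v w = 0"
  using A_pos_vle row_out A_nonneg up_V by (metis less_eq_real_def subsetD)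

lemma M_row_C: "C \<in> components G \<Longrightarrow> v \<in> C \<Longrightarrow> w \<in> upclosure G C \<Longrightarrow> w \<notin> C \<Longrightarrow> vmatrix G i v w = 0"
  using vmatrix_pos_vle row_C vmatrix_nonneg by (metis less_eq_real_def)

lemma M_row_out: "v \<notin> upclosure G C \<Longrightarrow> w \<in> upclosure G C \<Longrightarrow> vmatrix G i v w = 0"
  using vmatrix_pos_vle row_out vmatrix_nonneg by (metis less_eq_real_def)

lemma offpos: "C \<in> components G \<Longrightarrow> v \<in> C \<Longrightarrow> w \<in> C \<Longrightarrow> v \<noteq> w \<Longrightarrow> A v w > 0"
  using comp_equiv A_vle_pos unfolding vequiv_def by blast

lemma comp_le_card:
  assumes C: "C \<in> components G" and D: "D \<in> components G" and le: "comp_le G C D" and ne: "C \<noteq> D"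
  shows "card (upclosure G C) < card (upclosure G D)"
proof -
  obtain a b where ab: "a \<in> C" "b \<in> D" "vle G a b" using le unfolding comp_le_def by auto
  have sub: "upclosure G C \<subseteq> upclosure G D"
  proof
    fix w assume "w \<in> upclosure G C"
    then obtain c where c: "w \<in> V" "c \<in> C" "vle G w c" unfolding upclosure_def by auto
    have "vle G c a" using comp_equiv[OF C c(2) ab(1)] unfolding vequiv_def by auto
    then have "vle G w b" using c ab vle_trans by blast
    then show "w \<in> upclosure G D" using c ab unfolding upclosure_def by auto
  qed
  have "b \<notin> upclosure G C"
  proof
    assume "b \<in> upclosure G C"
    then obtain c where c: "c \<in> C" "vle G b c" unfolding upclosure_def by auto
    have "vle G c a" using comp_equiv[OF C c(1) ab(1)] unfolding vequiv_def by auto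
    then have "vle G b a" using c vle_trans by blast
    then have "b \<in> C" using comp_closed[OF C ab(1)] ab unfolding vequiv_def by blast
    then have "C = D" using comp_cls[OF C] comp_cls[OF D] ab by metis
    then show False using ne by simp
  qed
  moreover have "b \<in> upclosure G D" using C_up[OF D] ab by auto
  ultimately have "upclosure G C \<subset> upclosure G D" using sub by blast
  then show ?thesis using finV up_V by (meson finite_subset psubset_card_mono)
qed

lemma comp_le_trans:
  assumes "comp_le G C D" "comp_le G D E" "D \<in> components G"
  shows "comp_le G C E"
proof -
  obtain a b where ab: "a \<in> C" "b \<in> D" "vle G a b" using assms(1) unfolding comp_le_def by auto
  obtain b' e where be: "b' \<in> D" "e \<in> E" "vle G b' e" using assms(2) unfolding comp_le_def by auto
  have "vle G b b'" using comp_equiv[OF assms(3) ab(2) be(1)] unfolding vequiv_def by auto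
  then show ?thesis unfolding comp_le_def using ab be vle_trans by blast
qed

lemma max_comp:
  assumes fin: "finite K" and ne: "K \<noteq> {}" and sub: "K \<subseteq> components G"
  shows "\<exists>C0\<in>K. \<forall>C\<in>K. comp_le G C0 C \<longrightarrow> C = C0"
proof -
  have "Max ((\<lambda>C. card (upclosure G C)) ` K) \<in> (\<lambda>C. card (upclosure G C)) ` K" using fin ne by simp
  then obtain C0 where C0: "C0 \<in> K" "card (upclosure G C0) = Max ((\<lambda>C. card (upclosure G C)) ` K)" by auto
  have "C = C0" if "C \<in> K" "comp_le G C0 C" for C
  proof (rule ccontr)
    assume "C \<noteq> C0"
    then have "card (upclosure G C0) < card (upclosure G C)"
      using comp_le_card[of C0 C] sub C0(1) that by (metis subsetD)
    moreover have "card (upclosure G C) \<le> card (upclosure G C0)" using C0 fin that by auto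
    ultimately show False by simp
  qed
  then show ?thesis using C0 by blast
qed

end

context kgwc begin

definition xprop :: "'a set \<Rightarrow> ('a \<Rightarrow> real) \<Rightarrow> bool" where
  "xprop C x \<longleftrightarrow> (\<forall>v. v \<notin> V \<longrightarrow> x v = 0) \<and> (\<forall>v\<in>V. 0 \<le> x v) \<and>
     (\<Sum>v\<in>V. x v) = 1 \<and>
     (\<forall>v\<in>V. (\<Sum>w\<in>V. A v w * x w) = spec_rad C A * x v) \<and>
     (\<forall>v. v \<notin> upclosure G C \<longrightarrow> x v = 0)"

lemma xFC_THE: "xFC k G F C = (THE x. xprop C x)"
  unfolding xFC_def xprop_def ..

lemma Anon_on: "\<forall>v\<in>S. \<forall>w\<in>S. A v w \<ge> 0" using A_nonneg by auto

lemma gap_D: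
  assumes H: "F_harmonic k G F C" and D: "D = upclosure G C - C" and ne: "D \<noteq> {}"
  shows "\<exists>u l'. l' < spec_rad C A \<and> (\<forall>v\<in>D. u v > 0) \<and> (\<forall>v\<in>D. (\<Sum>w\<in>D. A v w * u w) \<le> l' * u v)"
proof -
  have lt: "spec_rad D A < spec_rad C A" using H ne unfolding F_harmonic_def D by auto
  have finD: "finite D" using D up_V finV finite_subset by blast
  from nonneg_dichotomy[OF finD ne Anon_on, of "spec_rad C A"] show ?thesis
  proof
    assume "\<exists>x r. spec_rad C A \<le> r \<and> (\<forall>v\<in>D. 0 \<le> x v) \<and> sum x D = 1 \<and> (\<forall>v\<in>D. (\<Sum>w\<in>D. A v w * x w) = r * x v)"
    then obtain x r where xr: "spec_rad C A \<le> r" "sum x D = 1" "\<forall>v\<in>D. (\<Sum>w\<in>D. A v w * x w) = r * x v" by blast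
    have "\<exists>v\<in>D. x v \<noteq> 0" using xr(2) by (metis sum.neutral zero_neq_one)
    from eigval_le_spec_rad[OF finD Anon_on this xr(3)] have "r \<le> spec_rad D A" .
    then show ?thesis using xr(1) lt by simp
  qed blast
qed

lemma pf_C:
  assumes C: "C \<in> components G"
  shows "\<exists>x. (\<forall>v\<in>C. x v > 0) \<and> (\<forall>v\<in>C. (\<Sum>w\<in>C. A v w * x w) = spec_rad C A * x v)"
proof -
  define B where "B v w = A v w + (if v = w then 1 else 0)" for v w
  have "\<forall>v\<in>C. \<forall>w\<in>C. B v w > 0"
  proof (intro ballI)
    fix v w assume "v \<in> C" "w \<in> C"
    then show "B v w > 0" unfolding B_def using offpos[OF C] A_nonneg[of v w]
      by (cases "v = w") auto
  qed
  from pf_pos[OF comp_fin[OF C] comp_ne[OF C] this] obtain x s where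
    xs: "\<forall>v\<in>C. x v > 0" "\<forall>v\<in>C. (\<Sum>w\<in>C. B v w * x w) = s * x v" by blast
  have eig: "\<forall>v\<in>C. (\<Sum>w\<in>C. A v w * x w) = (s - 1) * x v"
  proof
    fix v assume v: "v \<in> C"
    have "(\<Sum>w\<in>C. B v w * x w) = (\<Sum>w\<in>C. A v w * x w + (if v = w then x w else 0))"
      unfolding B_def by (intro sum.cong) (auto simp: algebra_simps)
    also have "\<dots> = (\<Sum>w\<in>C. A v w * x w) + (\<Sum>w\<in>C. (if v = w then x w else 0))"
      by (rule sum.distrib)
    also have "(\<Sum>w\<in>C. (if v = w then x w else 0)) = x v" using v comp_fin[OF C] by simp
    finally show "(\<Sum>w\<in>C. A v w * x w) = (s - 1) * x v" using xs(2) v by (simp add: algebra_simps)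
  qed
  have "spec_rad C A = s - 1" by (rule spec_rad_pos_eig[OF comp_fin[OF C] comp_ne[OF C] xs(1) Anon_on eig])
  then show ?thesis using xs(1) eig by auto
qed

lemma sum_restrict:
  assumes "S \<subseteq> V" "\<forall>w\<in>V - S. f w = 0"
  shows "(\<Sum>w\<in>V. f w) = (\<Sum>w\<in>S. f w)"
  using sum.mono_neutral_right[OF finV assms(1), of f] assms(2) by simp

lemma xFC_exists:
  assumes H: "F_harmonic k G F C"
  shows "\<exists>X. xprop C X \<and> (\<forall>v\<in>C. X v > 0)"
proof -
  have C: "C \<in> components G" using H unfolding F_harmonic_def by auto
  define l where "l = spec_rad C A"
  define D where "D = upclosure G C - C"
  have CV: "C \<subseteq> V" using comp_V[OF C] .
  have DV: "D \<subseteq> V" unfolding D_def using up_V by auto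
  have CD: "C \<inter> D = {}" unfolding D_def by auto
  have up: "upclosure G C = C \<union> D" unfolding D_def using C_up[OF C] by auto
  have finC: "finite C" using comp_fin[OF C] .
  have finD: "finite D" using DV finV finite_subset by blast
  obtain x where x: "\<forall>v\<in>C. x v > 0" "\<forall>v\<in>C. (\<Sum>w\<in>C. A v w * x w) = l * x v" using pf_C[OF C] unfolding l_def by blast
  have "\<exists>y. (\<forall>v\<in>D. y v \<ge> 0) \<and> (\<forall>v\<in>D. l * y v = (\<Sum>w\<in>D. A v w * y w) + (\<Sum>w\<in>C. A v w * x w))"
  proof (cases "D = {}")
    case True then show ?thesis by auto
  next
    case False
    from gap_D[OF H D_def False] obtain u l' where ul: "l' < l" "\<forall>v\<in>D. u v > 0" "\<forall>v\<in>D. (\<Sum>w\<in>D. A v w * u w) \<le> l' * u v"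
      unfolding l_def by blast
    have "\<forall>v\<in>D. (\<Sum>w\<in>C. A v w * x w) \<ge> 0" using x A_nonneg by (intro ballI sum_nonneg mult_nonneg_nonneg) (auto intro: less_imp_le)
    from mono_solve[OF finD Anon_on ul(2) ul(3) ul(1) this] show ?thesis .
  qed
  then obtain y where y: "\<forall>v\<in>D. y v \<ge> 0" "\<forall>v\<in>D. l * y v = (\<Sum>w\<in>D. A v w * y w) + (\<Sum>w\<in>C. A v w * x w)" by blast
  define X0 where "X0 v = (if v \<in> C then x v else if v \<in> D then y v else 0)" for v
  have X0nn: "X0 v \<ge> 0" for v unfolding X0_def using x y by (auto intro: less_imp_le)
  have X0out: "X0 v = 0" if "v \<notin> upclosure G C" for v unfolding X0_def using that up by auto
  have X0V: "X0 v = 0" if "v \<notin> V" for v unfolding X0_def using that CV DV by auto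
  have sumsplit: "(\<Sum>w\<in>V. A v w * X0 w) = (\<Sum>w\<in>C. A v w * x w) + (\<Sum>w\<in>D. A v w * y w)" for v
  proof -
    have "(\<Sum>w\<in>V. A v w * X0 w) = (\<Sum>w\<in>C \<union> D. A v w * X0 w)"
      using CV DV X0out up by (intro sum_restrict) auto
    also have "\<dots> = (\<Sum>w\<in>C. A v w * X0 w) + (\<Sum>w\<in>D. A v w * X0 w)"
      using finC finD CD by (rule sum.union_disjoint)
    also have "\<dots> = (\<Sum>w\<in>C. A v w * x w) + (\<Sum>w\<in>D. A v w * y w)"
      unfolding X0_def using CD by (intro arg_cong2[where f="(+)"] sum.cong) auto
    finally show ?thesis .
  qed
  have X0eig: "(\<Sum>w\<in>V. A v w * X0 w) = l * X0 v" if v: "v \<in> V" for v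
  proof (cases "v \<in> C")
    case True
    have "(\<Sum>w\<in>D. A v w * y w) = 0" using A_row_C[OF C True] unfolding D_def by auto
    then show ?thesis using sumsplit x True unfolding X0_def by simp
  next
    case False
    show ?thesis
    proof (cases "v \<in> D")
      case True
      then show ?thesis using sumsplit y False unfolding X0_def by simp
    next
      case nD: False
      then have vo: "v \<notin> upclosure G C" using False up by auto
      have "(\<Sum>w\<in>C. A v w * x w) = 0" "(\<Sum>w\<in>D. A v w * y w) = 0"
        using A_row_out[OF v vo] up by auto
      then show ?thesis using sumsplit False nD unfolding X0_def by simp
    qed
  qed
  define N where "N = (\<Sum>v\<in>V. X0 v)"
  have "(\<Sum>v\<in>C. X0 v) \<le> N" unfolding N_def using CV finV X0nn by (intro sum_mono2) auto
  moreover have "(\<Sum>v\<in>C. X0 v) > 0" using finC comp_ne[OF C] x unfolding X0_def by (intro sum_pos) auto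
  ultimately have Npos: "N > 0" by simp
  define X where "X v = X0 v / N" for v
  have "xprop C X" unfolding xprop_def
  proof (intro conjI allI ballI impI)
    show "\<And>v. v \<notin> V \<Longrightarrow> X v = 0" unfolding X_def using X0V by simp
    show "\<And>v. v \<in> V \<Longrightarrow> 0 \<le> X v" unfolding X_def using X0nn Npos by simp
    show "(\<Sum>v\<in>V. X v) = 1" unfolding X_def N_def using Npos N_def by (simp add: sum_divide_distrib[symmetric])
    show "\<And>v. v \<notin> upclosure G C \<Longrightarrow> X v = 0" unfolding X_def using X0out by simp
    fix v assume v: "v \<in> V"
    have "(\<Sum>w\<in>V. A v w * X w) = (\<Sum>w\<in>V. A v w * X0 w) / N" unfolding X_def
      by (simp add: sum_divide_distrib)
    then show "(\<Sum>w\<in>V. A v w * X w) = spec_rad C A * X v" using X0eig[OF v] unfolding X_def l_def by simp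
  qed
  moreover have "\<forall>v\<in>C. X v > 0" unfolding X_def X0_def using x Npos by auto
  ultimately show ?thesis by blast
qed

lemma xprop_unique:
  assumes H: "F_harmonic k G F C" and X: "xprop C X" and Xpos: "\<forall>v\<in>C. X v > 0" and Y: "xprop C Y"
  shows "Y = X"
proof -
  have C: "C \<in> components G" using H unfolding F_harmonic_def by auto
  define l where "l = spec_rad C A"
  define D where "D = upclosure G C - C"
  have CV: "C \<subseteq> V" using comp_V[OF C] .
  have DV: "D \<subseteq> V" unfolding D_def using up_V by auto
  have up: "upclosure G C = C \<union> D" unfolding D_def using C_up[OF C] by auto
  have finC: "finite C" using comp_fin[OF C] .
  have finD: "finite D" using DV finV finite_subset by blast
  have Xp: "\<forall>v. v \<notin> V \<longrightarrow> X v = 0" "\<forall>v\<in>V. 0 \<le> X v" "(\<Sum>v\<in>V. X v) = 1"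
    "\<forall>v\<in>V. (\<Sum>w\<in>V. A v w * X w) = l * X v" "\<forall>v. v \<notin> upclosure G C \<longrightarrow> X v = 0"
    using X unfolding xprop_def l_def by auto
  have Yp: "\<forall>v. v \<notin> V \<longrightarrow> Y v = 0" "\<forall>v\<in>V. 0 \<le> Y v" "(\<Sum>v\<in>V. Y v) = 1"
    "\<forall>v\<in>V. (\<Sum>w\<in>V. A v w * Y w) = l * Y v" "\<forall>v. v \<notin> upclosure G C \<longrightarrow> Y v = 0"
    using Y unfolding xprop_def l_def by auto
  have onC: "(\<Sum>w\<in>V. A v w * Z w) = (\<Sum>w\<in>C. A v w * Z w)"
    if v: "v \<in> C" and Z: "\<forall>w. w \<notin> upclosure G C \<longrightarrow> Z w = 0" for v Z
    using CV A_row_C[OF C v] Z by (intro sum_restrict) auto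
  have XC: "\<forall>v\<in>C. (\<Sum>w\<in>C. A v w * X w) = l * X v" using onC Xp(4,5) CV by (metis subsetD)
  have YC: "\<forall>v\<in>C. (\<Sum>w\<in>C. A v w * Y w) = l * Y v" using onC Yp(4,5) CV by (metis subsetD)
  have offC: "\<forall>v\<in>C. \<forall>w\<in>C. v \<noteq> w \<longrightarrow> A v w > 0" using offpos[OF C] by blast
  have YCnn: "\<forall>v\<in>C. 0 \<le> Y v" using Yp(2) CV by blast
  obtain c where c: "\<forall>v\<in>C. Y v = c * X v"
    using irred_unique[OF finC Xpos Anon_on offC XC YCnn YC] by blast
  define Z where "Z v = Y v - c * X v" for v
  have ZC: "Z v = 0" if "v \<in> C" for v unfolding Z_def using c that by simp
  have Zout: "Z v = 0" if "v \<notin> upclosure G C" for v unfolding Z_def using Xp(5) Yp(5) that by simp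
  have ZD: "\<forall>v\<in>D. Z v = 0"
  proof (cases "D = {}")
    case True then show ?thesis by simp
  next
    case False
    from gap_D[OF H D_def False] obtain u l' where ul: "l' < l" "\<forall>v\<in>D. u v > 0" "\<forall>v\<in>D. (\<Sum>w\<in>D. A v w * u w) \<le> l' * u v"
      unfolding l_def by blast
    have "\<forall>v\<in>D. (\<Sum>w\<in>D. A v w * Z w) = l * Z v"
    proof
      fix v assume v: "v \<in> D"
      have "(\<Sum>w\<in>V. A v w * Z w) = (\<Sum>w\<in>D. A v w * Z w)"
        using DV ZC Zout up by (intro sum_restrict) auto
      moreover have "(\<Sum>w\<in>V. A v w * Z w) = (\<Sum>w\<in>V. A v w * Y w) - c * (\<Sum>w\<in>V. A v w * X w)"
        unfolding Z_def by (simp add: algebra_simps sum_subtractf sum_distrib_left)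
      ultimately show "(\<Sum>w\<in>D. A v w * Z w) = l * Z v" using Xp(4) Yp(4) v DV unfolding Z_def
        by (auto simp: algebra_simps)
    qed
    from no_eigvec[OF finD Anon_on ul(2) ul(3) ul(1) this] show ?thesis .
  qed
  have Zall: "Z v = 0" for v using ZC ZD Zout up by auto
  have YcX: "Y v = c * X v" for v using Zall[of v] unfolding Z_def by simp
  have "1 = c * 1" using Yp(3) Xp(3) YcX by (simp add: sum_distrib_left[symmetric])
  then have "c = 1" by simp
  then show ?thesis using YcX by auto
qed

lemma xFC_props:
  assumes H: "F_harmonic k G F C"
  shows "xprop C (xFC k G F C) \<and> (\<forall>v\<in>C. xFC k G F C v > 0)"
proof -
  obtain X where X: "xprop C X" "\<forall>v\<in>C. X v > 0" using xFC_exists[OF H] by blast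
  have "(THE x. xprop C x) = X"
  proof (rule the_equality)
    show "xprop C X" by (rule X(1))
    fix Y assume "xprop C Y"
    then show "Y = X" by (rule xprop_unique[OF H X(1) X(2)])
  qed
  then show ?thesis using X xFC_THE by simp
qed

end

context kgwc begin

lemma xprop_C_eig:
  assumes C: "C \<in> components G" and X: "xprop C X"
  shows "\<forall>v\<in>C. (\<Sum>w\<in>C. A v w * X w) = spec_rad C A * X v"
proof
  fix v assume v: "v \<in> C"
  have "(\<Sum>w\<in>V. A v w * X w) = (\<Sum>w\<in>C. A v w * X w)"
  proof (rule sum_restrict)
    show "C \<subseteq> V" using comp_V[OF C] .
    show "\<forall>w\<in>V - C. A v w * X w = 0"
    proof
      fix w assume w: "w \<in> V - C"
      show "A v w * X w = 0"
      proof (cases "w \<in> upclosure G C")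
        case True then show ?thesis using A_row_C[OF C v True] w by simp
      next
        case False then show ?thesis using X unfolding xprop_def by simp
      qed
    qed
  qed
  then show "(\<Sum>w\<in>C. A v w * X w) = spec_rad C A * X v" using X v comp_V[OF C] unfolding xprop_def by auto
qed

lemma lin_indep:
  assumes fin: "finite K" and H: "\<forall>C\<in>K. F_harmonic k G F C"
    and z: "\<And>v. (\<Sum>C\<in>K. s C * xFC k G F C v) = 0"
  shows "\<forall>C\<in>K. s C = 0"
proof (rule ccontr)
  assume "\<not> (\<forall>C\<in>K. s C = 0)"
  define K' where "K' = {C\<in>K. s C \<noteq> 0}"
  have K'ne: "K' \<noteq> {}" unfolding K'_def using \<open>\<not> (\<forall>C\<in>K. s C = 0)\<close> by auto
  have K'fin: "finite K'" unfolding K'_def using fin by auto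
  have K'sub: "K' \<subseteq> components G" unfolding K'_def using H unfolding F_harmonic_def by auto
  obtain C0 where C0: "C0 \<in> K'" "\<forall>C\<in>K'. comp_le G C0 C \<longrightarrow> C = C0" using max_comp[OF K'fin K'ne K'sub] by blast
  have C0c: "C0 \<in> components G" using C0 K'sub by auto
  obtain v where v: "v \<in> C0" using comp_ne[OF C0c] by auto
  have zero: "s C * xFC k G F C v = 0" if "C \<in> K" "C \<noteq> C0" for C
  proof (cases "s C = 0")
    case False
    then have CK': "C \<in> K'" unfolding K'_def using that by auto
    have "xFC k G F C v = 0"
    proof (rule ccontr)
      assume "xFC k G F C v \<noteq> 0"
      then have "v \<in> upclosure G C" using xFC_props H that unfolding xprop_def by blast
      then obtain c where "c \<in> C" "vle G v c" unfolding upclosure_def by auto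
      then have "comp_le G C0 C" unfolding comp_le_def using v by auto
      then show False using C0 CK' that by auto
    qed
    then show ?thesis by simp
  qed simp
  have C0K: "C0 \<in> K" using C0 unfolding K'_def by auto
  have "(\<Sum>C\<in>K. s C * xFC k G F C v) = s C0 * xFC k G F C0 v + (\<Sum>C\<in>K - {C0}. s C * xFC k G F C v)"
    by (rule sum.remove[OF fin C0K])
  also have "(\<Sum>C\<in>K - {C0}. s C * xFC k G F C v) = 0" using zero by (intro sum.neutral) auto
  finally have "(\<Sum>C\<in>K. s C * xFC k G F C v) = s C0 * xFC k G F C0 v" by simp
  moreover have "s C0 * xFC k G F C0 v \<noteq> 0" using C0 xFC_props[of C0] H v unfolding K'_def by force
  ultimately show False using z by simp
qed

end

locale kgpsi = kgwc +
  fixes r :: "nat \<Rightarrow> real" and \<beta> :: real and \<psi> :: "'a \<Rightarrow> real"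
  assumes ns: "no_sources k G" and hv: "harmonic_vec k G r \<beta> \<psi>"
begin

definition e :: "nat \<Rightarrow> real" where "e i = exp (\<beta> * r i)"
definition lam :: real where "lam = (\<Sum>a\<leftarrow>F. \<Prod>i\<leftarrow>[1..<Suc k]. e i ^ a i)"

lemma psi_out: "v \<notin> V \<Longrightarrow> \<psi> v = 0" using hv unfolding harmonic_vec_def by auto
lemma psi_nn: "\<psi> v \<ge> 0" using hv psi_out unfolding harmonic_vec_def by (cases "v \<in> V") auto
lemma psi_sum: "(\<Sum>v\<in>V. \<psi> v) = 1" using hv unfolding harmonic_vec_def by auto
lemma psi_eig_i: "i \<in> {1..k} \<Longrightarrow> v \<in> V \<Longrightarrow> (\<Sum>w\<in>V. vmatrix G i v w * \<psi> w) = e i * \<psi> v"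
  using hv unfolding harmonic_vec_def e_def by auto

lemma pow_eig: "\<forall>v\<in>V. vapp V (vmatrix_pow k G a) \<psi> v = (\<Prod>i\<leftarrow>[1..<Suc k]. e i ^ a i) * \<psi> v"
proof -
  have "\<forall>i\<in>set [1..<Suc k]. \<forall>u\<in>V. vapp V (mpow V (vmatrix G i) (a i)) \<psi> u = e i ^ a i * \<psi> u"
  proof (intro ballI)
    fix i u assume i: "i \<in> set [1..<Suc k]" and u: "u \<in> V"
    have "\<forall>u\<in>V. vapp V (vmatrix G i) \<psi> u = e i * \<psi> u" using psi_eig_i i unfolding vapp_def by auto
    from mpow_eig[OF finV this] u show "vapp V (mpow V (vmatrix G i) (a i)) \<psi> u = e i ^ a i * \<psi> u" by blast
  qed
  from foldl_eig[OF this, of mone] show ?thesis unfolding vmatrix_pow_def using vapp_mone[OF finV] by auto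
qed

lemma sum_list_mult_right: "(\<Sum>a\<leftarrow>L. f a * c) = (\<Sum>a\<leftarrow>L. f a) * (c::real)"
  by (induction L) (auto simp: algebra_simps)

lemma A_eig: "v \<in> V \<Longrightarrow> (\<Sum>w\<in>V. A v w * \<psi> w) = lam * \<psi> v"
proof -
  assume v: "v \<in> V"
  have "(\<Sum>w\<in>V. A v w * \<psi> w) = vapp V A \<psi> v" unfolding vapp_def ..
  also have "\<dots> = (\<Sum>a\<leftarrow>F. vapp V (vmatrix_pow k G a) \<psi> v)" unfolding AF_def by (rule vapp_sum_list_mat)
  also have "\<dots> = (\<Sum>a\<leftarrow>F. (\<Prod>i\<leftarrow>[1..<Suc k]. e i ^ a i) * \<psi> v)"
    using pow_eig v by (intro arg_cong[where f=sum_list] map_cong) auto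
  also have "\<dots> = lam * \<psi> v" unfolding lam_def by (rule sum_list_mult_right)
  finally show ?thesis .
qed

lemma V_ne: "V \<noteq> {}" using psi_sum by auto

lemma F_ne: "F \<noteq> []"
proof
  assume F0: "F = []"
  obtain v where v: "v \<in> V" using V_ne by auto
  have u1: "unitv 1 \<in> Nk k" using unitv_Nk kpos by auto
  have "\<exists>p\<in>mor G. rng G p = v \<and> deg G p = unitv 1" using ns v u1 unfolding no_sources_def by blast
  then obtain p where p: "p \<in> mor G" "rng G p = v" "deg G p = unitv 1" by blast
  have pn: "paths G (unitv 1) v (src G p) \<noteq> {}" using p unfolding paths_def by auto
  have un: "unitv 1 \<noteq> 0"
  proof
    assume "unitv 1 = 0"
    then have "unitv 1 1 = (0::nat\<Rightarrow>nat) 1" by simp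
    then show False unfolding unitv_def by simp
  qed
  have "\<exists>l\<in>Nk k. l \<noteq> 0 \<and> paths G l v (src G p) \<noteq> {}" using u1 un pn by blast
  then have "A v (src G p) > 0" using A_pos_iff[OF v src_V[OF p(1)]] by blast
  moreover have "A v (src G p) = 0" using F0 unfolding AF_def by simp
  ultimately show False by simp
qed

lemma prod_list_pos_real: "(\<And>x. x \<in> set xs \<Longrightarrow> x > 0) \<Longrightarrow> prod_list xs > (0::real)"
  by (induction xs) auto

lemma lam_pos: "lam > 0"
proof -
  obtain a F' where F: "F = a # F'" using F_ne by (cases F) auto
  have pos: "(\<Prod>i\<leftarrow>[1..<Suc k]. e i ^ a i) > 0" for a unfolding e_def by (intro prod_list_pos_real) auto
  have "(\<Prod>i\<leftarrow>[1..<Suc k]. e i ^ a i) > 0" by (rule pos)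
  moreover have "(\<Sum>a\<leftarrow>F'. \<Prod>i\<leftarrow>[1..<Suc k]. e i ^ a i) \<ge> 0"
  proof (induction F')
    case (Cons b L)
    then show ?case using pos[of b] by simp
  qed simp
  moreover have "lam = (\<Prod>i\<leftarrow>[1..<Suc k]. e i ^ a i) + (\<Sum>a\<leftarrow>F'. \<Prod>i\<leftarrow>[1..<Suc k]. e i ^ a i)"
    unfolding lam_def by (simp only: F list.map sum_list.Cons)
  ultimately show ?thesis by linarith
qed

definition S where "S = {v\<in>V. \<psi> v > 0}"

lemma psi_pos_S: "v \<in> S \<longleftrightarrow> v \<in> V \<and> \<psi> v > 0" unfolding S_def by simp

lemma term_le: "v \<in> V \<Longrightarrow> w \<in> V \<Longrightarrow> A v w * \<psi> w \<le> lam * \<psi> v"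
proof -
  assume v: "v \<in> V" and w: "w \<in> V"
  have "A v w * \<psi> w \<le> (\<Sum>u\<in>V. A v u * \<psi> u)"
    using finV w A_nonneg psi_nn by (intro member_le_sum[of w V "\<lambda>u. A v u * \<psi> u"]) auto
  then show ?thesis using A_eig[OF v] by simp
qed

lemma down: assumes "vle G v w" "w \<in> S" shows "v \<in> S"
proof (cases "v = w")
  case True then show ?thesis using assms by simp
next
  case False
  have vw: "v \<in> V" "w \<in> V" using vle_V[OF assms(1)] by auto
  have "A v w > 0" using A_vle_pos[OF assms(1) False] .
  then have "A v w * \<psi> w > 0" using assms(2) unfolding S_def by auto
  then have "lam * \<psi> v > 0" using term_le[OF vw] by linarith
  then show ?thesis using lam_pos vw unfolding S_def by (simp add: zero_less_mult_iff)
qed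

lemma cls_S: "v \<in> S \<Longrightarrow> cls v \<subseteq> S" using down unfolding cls_def vequiv_def by blast

definition CC where "CC = {C\<in>components G. C \<subseteq> S \<and> (\<forall>D\<in>components G. D \<subseteq> S \<and> comp_le G C D \<longrightarrow> D = C)}"

lemma CC_comp: "C \<in> CC \<Longrightarrow> C \<in> components G" unfolding CC_def by auto
lemma CC_fin: "finite CC" using fin_components unfolding CC_def by (rule rev_finite_subset) auto

lemma maxrow: assumes C: "C \<in> CC" and v: "v \<in> C" and vw: "vle G v w" and w: "\<psi> w > 0" shows "w \<in> C"
proof -
  have wV: "w \<in> V" using vle_V[OF vw] by auto
  then have wS: "w \<in> S" using w unfolding S_def by auto
  have "cls w \<in> components G" "cls w \<subseteq> S" using cls_comp[OF wV] cls_S[OF wS] by auto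
  moreover have "comp_le G C (cls w)" unfolding comp_le_def using v vw cls_self[OF wV] by auto
  ultimately have "cls w = C" using C unfolding CC_def by auto
  then show ?thesis using cls_self[OF wV] by auto
qed

lemma up_S: assumes C: "C \<in> CC" shows "upclosure G C \<subseteq> S"
proof
  fix w assume "w \<in> upclosure G C"
  then obtain c where c: "c \<in> C" "vle G w c" unfolding upclosure_def by auto
  then show "w \<in> S" using down C unfolding CC_def by auto
qed

lemma rowpsi:
  assumes C: "C \<in> CC" and v: "v \<in> C" and Mnn: "\<And>w. M v w \<ge> 0" and Mvle: "\<And>w. w \<in> V \<Longrightarrow> M v w > 0 \<Longrightarrow> vle G v w"
  shows "(\<Sum>w\<in>V. M v w * \<psi> w) = (\<Sum>w\<in>C. M v w * \<psi> w)"
proof (rule sum_restrict)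
  show "C \<subseteq> V" using comp_V[OF CC_comp[OF C]] .
  show "\<forall>w\<in>V - C. M v w * \<psi> w = 0"
  proof
    fix w assume w: "w \<in> V - C"
    show "M v w * \<psi> w = 0"
    proof (cases "\<psi> w > 0")
      case True
      have "\<not> M v w > 0" using maxrow[OF C v _ True] Mvle w by auto
      then show ?thesis using Mnn[of w] by simp
    qed (use psi_nn[of w] in simp)
  qed
qed

lemma CV: "C \<in> CC \<Longrightarrow> v \<in> C \<Longrightarrow> v \<in> V" using comp_V CC_comp by blast

lemma psiC_A: assumes C: "C \<in> CC" shows "\<forall>v\<in>C. (\<Sum>w\<in>C. A v w * \<psi> w) = lam * \<psi> v"
proof
  fix v assume v: "v \<in> C"
  have "(\<Sum>w\<in>V. A v w * \<psi> w) = (\<Sum>w\<in>C. A v w * \<psi> w)"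
    by (rule rowpsi[OF C v A_nonneg A_pos_vle[OF CV[OF C v]]])
  then show "(\<Sum>w\<in>C. A v w * \<psi> w) = lam * \<psi> v" using A_eig[OF CV[OF C v]] by simp
qed

lemma psiC_M: assumes C: "C \<in> CC" and i: "i \<in> {1..k}" shows "\<forall>v\<in>C. (\<Sum>w\<in>C. vmatrix G i v w * \<psi> w) = e i * \<psi> v"
proof
  fix v assume v: "v \<in> C"
  have "(\<Sum>w\<in>V. vmatrix G i v w * \<psi> w) = (\<Sum>w\<in>C. vmatrix G i v w * \<psi> w)"
    by (rule rowpsi[OF C v vmatrix_nonneg vmatrix_pos_vle])
  then show "(\<Sum>w\<in>C. vmatrix G i v w * \<psi> w) = e i * \<psi> v" using psi_eig_i[OF i CV[OF C v]] by simp
qed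

lemma psiC_pos: "C \<in> CC \<Longrightarrow> \<forall>v\<in>C. \<psi> v > 0" unfolding CC_def S_def by auto

lemma spec_C_A: assumes C: "C \<in> CC" shows "spec_rad C A = lam"
  by (rule spec_rad_pos_eig[OF comp_fin[OF CC_comp[OF C]] comp_ne[OF CC_comp[OF C]] psiC_pos[OF C] Anon_on psiC_A[OF C]])

lemma spec_C_M: "C \<in> CC \<Longrightarrow> i \<in> {1..k} \<Longrightarrow> spec_rad C (vmatrix G i) = e i"
proof -
  assume C: "C \<in> CC" and i: "i \<in> {1..k}"
  have "\<forall>v\<in>C. \<forall>w\<in>C. vmatrix G i v w \<ge> 0" using vmatrix_nonneg by auto
  from spec_rad_pos_eig[OF comp_fin[OF CC_comp[OF C]] comp_ne[OF CC_comp[OF C]] psiC_pos[OF C] this psiC_M[OF C i]]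
  show ?thesis .
qed

lemma GAP:
  assumes TV: "T \<subseteq> V" and Tpos: "\<forall>v\<in>T. \<psi> v > 0"
    and reach: "\<forall>v\<in>T. \<exists>w\<in>V - T. A v w > 0 \<and> \<psi> w > 0"
  shows "\<exists>l'. l' < lam \<and> (\<forall>v\<in>T. (\<Sum>w\<in>T. A v w * \<psi> w) \<le> l' * \<psi> v)"
proof (cases "T = {}")
  case True then show ?thesis using lam_pos by (intro exI[of _ "lam - 1"]) auto
next
  case False
  have finT: "finite T" using TV finV finite_subset by blast
  define b where "b v = (\<Sum>w\<in>V - T. A v w * \<psi> w)" for v
  have bpos: "b v > 0" if v: "v \<in> T" for v
  proof -
    obtain w where w: "w \<in> V - T" "A v w > 0" "\<psi> w > 0" using reach v by blast
    have "A v w * \<psi> w \<le> b v" unfolding b_def using finV w A_nonneg psi_nn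
      by (intro member_le_sum[of w "V - T" "\<lambda>u. A v u * \<psi> u"]) auto
    moreover have "A v w * \<psi> w > 0" using w by simp
    ultimately show ?thesis by linarith
  qed
  have split: "(\<Sum>w\<in>T. A v w * \<psi> w) = lam * \<psi> v - b v" if v: "v \<in> T" for v
  proof -
    have "(\<Sum>w\<in>V. A v w * \<psi> w) = (\<Sum>w\<in>V - T. A v w * \<psi> w) + (\<Sum>w\<in>T. A v w * \<psi> w)"
      using sum.subset_diff[OF TV finV] by simp
    then show ?thesis using A_eig[of v] v TV unfolding b_def by auto
  qed
  define \<delta> where "\<delta> = Min ((\<lambda>v. b v / \<psi> v) ` T)"
  have \<delta>pos: "\<delta> > 0" unfolding \<delta>_def using finT False bpos Tpos by auto
  have "\<forall>v\<in>T. (\<Sum>w\<in>T. A v w * \<psi> w) \<le> (lam - \<delta>) * \<psi> v"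
  proof
    fix v assume v: "v \<in> T"
    have "\<delta> \<le> b v / \<psi> v" unfolding \<delta>_def using finT v by auto
    then have "\<delta> * \<psi> v \<le> b v" using Tpos v by (simp add: le_divide_eq)
    then show "(\<Sum>w\<in>T. A v w * \<psi> w) \<le> (lam - \<delta>) * \<psi> v" using split[OF v] by (simp add: algebra_simps)
  qed
  then show ?thesis using \<delta>pos by (intro exI[of _ "lam - \<delta>"]) auto
qed

lemma gapC:
  assumes C: "C \<in> CC"
  shows "\<exists>l'. l' < lam \<and> (\<forall>v\<in>upclosure G C - C. (\<Sum>w\<in>upclosure G C - C. A v w * \<psi> w) \<le> l' * \<psi> v)"
proof (rule GAP)
  show "upclosure G C - C \<subseteq> V" using up_V by auto
  show "\<forall>v\<in>upclosure G C - C. \<psi> v > 0" using up_S[OF C] unfolding S_def by auto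
  show "\<forall>v\<in>upclosure G C - C. \<exists>w\<in>V - (upclosure G C - C). A v w > 0 \<and> \<psi> w > 0"
  proof
    fix v assume v: "v \<in> upclosure G C - C"
    then obtain c where c: "c \<in> C" "vle G v c" unfolding upclosure_def by auto
    have "v \<noteq> c" using v c by auto
    then have "A v c > 0" using A_vle_pos c by blast
    moreover have "c \<in> V - (upclosure G C - C)" using c CV[OF C] by auto
    moreover have "\<psi> c > 0" using psiC_pos[OF C] c by auto
    ultimately show "\<exists>w\<in>V - (upclosure G C - C). A v w > 0 \<and> \<psi> w > 0" by blast
  qed
qed

lemma CC_harm: assumes C: "C \<in> CC" shows "F_harmonic k G F C"
  unfolding F_harmonic_def
proof (intro conjI)
  have Cc: "C \<in> components G" using CC_comp[OF C] .
  show "C \<in> components G" by (rule Cc)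
  show "\<not> trivial_comp G C"
  proof
    assume "trivial_comp G C"
    then obtain q where q: "between G C C = {q}" unfolding trivial_comp_def by auto
    obtain v where v: "v \<in> C" using comp_ne[OF Cc] by auto
    have vV: "v \<in> V" using CV[OF C v] .
    have spos: "(\<Sum>w\<in>C. A v w * \<psi> w) > 0" using psiC_A[OF C] v lam_pos psiC_pos[OF C] by auto
    have "\<exists>w\<in>C. A v w * \<psi> w \<noteq> 0"
    proof (rule ccontr)
      assume "\<not> (\<exists>w\<in>C. A v w * \<psi> w \<noteq> 0)"
      then have "(\<Sum>w\<in>C. A v w * \<psi> w) = 0" by (intro sum.neutral) blast
      then show False using spos by simp
    qed
    then obtain w where w: "w \<in> C" "A v w * \<psi> w \<noteq> 0" by blast
    then have "A v w > 0" using A_nonneg[of v w] by (simp add: less_le)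
    then obtain l where l: "l \<in> Nk k" "l \<noteq> 0" "paths G l v w \<noteq> {}" using A_pos_iff vV CV[OF C w(1)] by blast
    then obtain p where p: "p \<in> mor G" "deg G p = l" "rng G p = v" "src G p = w" unfolding paths_def by auto
    have "p \<in> between G C C" unfolding between_def using p v w by auto
    moreover have "v \<in> between G C C" unfolding between_def using V_mor[OF vV] v by auto
    ultimately have "p = v" using q by auto
    then show False using p l V_mor[OF vV] by auto
  qed
  show "upclosure G C - C = {} \<or> spec_rad (upclosure G C - C) A < spec_rad C A"
  proof (cases "upclosure G C - C = {}")
    case False
    obtain l' where l': "l' < lam" "\<forall>v\<in>upclosure G C - C. (\<Sum>w\<in>upclosure G C - C. A v w * \<psi> w) \<le> l' * \<psi> v"
      using gapC[OF C] by blast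
    have "spec_rad (upclosure G C - C) A \<le> l'"
    proof (rule spec_rad_lt[OF _ False Anon_on _ l'(2)])
      show "finite (upclosure G C - C)" using up_V finV finite_subset by blast
      show "\<forall>v\<in>upclosure G C - C. 0 < \<psi> v" using up_S[OF C] unfolding S_def by auto
    qed
    then show ?thesis using l'(1) spec_C_A[OF C] by simp
  qed simp
qed

end

context kgpsi begin

abbreviation X where "X C \<equiv> xFC k G F C"

lemma XC_props: "C \<in> CC \<Longrightarrow> xprop C (X C) \<and> (\<forall>v\<in>C. X C v > 0)"
  using xFC_props[OF CC_harm] by blast

lemma reach: assumes vS: "v \<in> S" shows "\<exists>C\<in>CC. \<exists>c\<in>C. vle G v c"
proof -
  have vV: "v \<in> V" using vS unfolding S_def by auto
  define Q where "Q = {D\<in>components G. D \<subseteq> S \<and> comp_le G (cls v) D}"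
  have cQ: "cls v \<in> Q" unfolding Q_def comp_le_def
    using cls_comp[OF vV] cls_S[OF vS] cls_self[OF vV] vle_refl[OF vV] by auto
  have Qfin: "finite Q" unfolding Q_def using fin_components by (rule rev_finite_subset) auto
  have Qsub: "Q \<subseteq> components G" unfolding Q_def by auto
  obtain D0 where D0: "D0 \<in> Q" "\<forall>D\<in>Q. comp_le G D0 D \<longrightarrow> D = D0"
    using max_comp[OF Qfin _ Qsub] cQ by blast
  have D0c: "D0 \<in> components G" "D0 \<subseteq> S" "comp_le G (cls v) D0" using D0(1) unfolding Q_def by auto
  have "D0 \<in> CC" unfolding CC_def
  proof (intro CollectI conjI ballI impI)
    show "D0 \<in> components G" "D0 \<subseteq> S" using D0c by auto
    fix E assume E: "E \<in> components G" "E \<subseteq> S \<and> comp_le G D0 E"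
    then have "E \<in> Q" unfolding Q_def using comp_le_trans[OF D0c(3) _ D0c(1)] by auto
    then show "E = D0" using D0(2) E by auto
  qed
  moreover obtain a b where ab: "a \<in> cls v" "b \<in> D0" "vle G a b" using D0c(3) unfolding comp_le_def by auto
  moreover have "vle G v a" using ab(1) unfolding cls_def vequiv_def by auto
  ultimately show ?thesis using vle_trans by blast
qed

definition tC where "tC C = (SOME c. \<forall>v\<in>C. \<psi> v = c * X C v)"

lemma t_prop: assumes C: "C \<in> CC" shows "(\<forall>v\<in>C. \<psi> v = tC C * X C v) \<and> tC C > 0"
proof -
  have Cc: "C \<in> components G" using CC_comp[OF C] .
  have XCp: "xprop C (X C)" "\<forall>v\<in>C. X C v > 0" using XC_props[OF C] by auto
  have offC: "\<forall>v\<in>C. \<forall>w\<in>C. v \<noteq> w \<longrightarrow> A v w > 0" using offpos[OF Cc] by blast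
  have XCeig: "\<forall>v\<in>C. (\<Sum>w\<in>C. A v w * X C w) = lam * X C v"
    using xprop_C_eig[OF Cc XCp(1)] spec_C_A[OF C] by simp
  have psinn: "\<forall>v\<in>C. 0 \<le> \<psi> v" using psi_nn by auto
  have ex: "\<exists>c. \<forall>v\<in>C. \<psi> v = c * X C v"
    by (rule irred_unique[OF comp_fin[OF Cc] XCp(2) Anon_on offC XCeig psinn psiC_A[OF C]])
  then have t: "\<forall>v\<in>C. \<psi> v = tC C * X C v" unfolding tC_def by (rule someI_ex)
  obtain v where v: "v \<in> C" using comp_ne[OF Cc] by auto
  have "tC C * X C v > 0" using t v psiC_pos[OF C] by auto
  then have "tC C > 0" using XCp(2)[rule_format, OF v] by (simp add: zero_less_mult_iff)
  then show ?thesis using t by auto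
qed

lemma max_CC: assumes C: "C \<in> CC" and C': "C' \<in> CC" and le: "comp_le G C C'" shows "C' = C"
  using C C' le unfolding CC_def by auto

lemma X_zero_other: assumes C: "C \<in> CC" and C': "C' \<in> CC" and ne: "C' \<noteq> C" and v: "v \<in> C"
  shows "X C' v = 0"
proof (rule ccontr)
  assume "X C' v \<noteq> 0"
  then have "v \<in> upclosure G C'" using XC_props[OF C'] unfolding xprop_def by blast
  then obtain c where "c \<in> C'" "vle G v c" unfolding upclosure_def by auto
  then have "comp_le G C C'" unfolding comp_le_def using v by auto
  then show False using max_CC[OF C C'] ne by simp
qed

lemma X_supp_S: assumes C: "C \<in> CC" and v: "v \<notin> S" shows "X C v = 0"
  using XC_props[OF C] up_S[OF C] v unfolding xprop_def by blast

lemma psi_S: "v \<notin> S \<Longrightarrow> \<psi> v = 0"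
  using psi_out psi_nn unfolding S_def by (metis (mono_tags, lifting) mem_Collect_eq order_less_le)

lemma decomp: "\<psi> = (\<lambda>v. \<Sum>C\<in>CC. tC C * X C v)"
proof -
  define Z where "Z v = \<psi> v - (\<Sum>C\<in>CC. tC C * X C v)" for v
  have Zout: "Z v = 0" if "v \<notin> S" for v unfolding Z_def using psi_S[OF that] X_supp_S that by simp
  have ZCC: "Z v = 0" if C: "C \<in> CC" and v: "v \<in> C" for C v
  proof -
    have "(\<Sum>C'\<in>CC. tC C' * X C' v) = tC C * X C v + (\<Sum>C'\<in>CC - {C}. tC C' * X C' v)"
      by (rule sum.remove[OF CC_fin C])
    also have "(\<Sum>C'\<in>CC - {C}. tC C' * X C' v) = 0"
      using X_zero_other[OF C _ _ v] by (intro sum.neutral) auto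
    finally show ?thesis unfolding Z_def using t_prop[OF C] v by simp
  qed
  define T where "T = S - \<Union>CC"
  have TV: "T \<subseteq> V" unfolding T_def S_def by auto
  have finT: "finite T" using TV finV finite_subset by blast
  have ZVT: "\<forall>w\<in>V - T. Z w = 0" unfolding T_def using Zout ZCC by blast
  have Zeig: "(\<Sum>w\<in>V. A v w * Z w) = lam * Z v" if v: "v \<in> V" for v
  proof -
    have sw: "(\<Sum>w\<in>V. A v w * (\<Sum>C\<in>CC. tC C * X C w)) = (\<Sum>C\<in>CC. tC C * (\<Sum>w\<in>V. A v w * X C w))"
      unfolding sum_distrib_left by (subst sum.swap) (simp add: mult.left_commute)
    have "(\<Sum>C\<in>CC. tC C * (\<Sum>w\<in>V. A v w * X C w)) = (\<Sum>C\<in>CC. tC C * (lam * X C v))"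
    proof (intro sum.cong refl)
      fix C assume C: "C \<in> CC"
      have "(\<Sum>w\<in>V. A v w * X C w) = spec_rad C A * X C v" using XC_props[OF C] v unfolding xprop_def by auto
      then show "tC C * (\<Sum>w\<in>V. A v w * X C w) = tC C * (lam * X C v)" using spec_C_A[OF C] by simp
    qed
    moreover have "(\<Sum>w\<in>V. A v w * Z w) = (\<Sum>w\<in>V. A v w * \<psi> w) - (\<Sum>w\<in>V. A v w * (\<Sum>C\<in>CC. tC C * X C w))"
      unfolding Z_def by (simp add: algebra_simps sum_subtractf)
    ultimately show ?thesis using sw A_eig[OF v] unfolding Z_def
      by (simp add: algebra_simps sum_distrib_left)
  qed
  have ZT: "\<forall>v\<in>T. (\<Sum>w\<in>T. A v w * Z w) = lam * Z v"
  proof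
    fix v assume v: "v \<in> T"
    have "(\<Sum>w\<in>V. A v w * Z w) = (\<Sum>w\<in>T. A v w * Z w)" using TV ZVT by (intro sum_restrict) auto
    then show "(\<Sum>w\<in>T. A v w * Z w) = lam * Z v" using Zeig v TV by auto
  qed
  have Tpos: "\<forall>v\<in>T. \<psi> v > 0" unfolding T_def S_def by auto
  have Treach: "\<forall>v\<in>T. \<exists>w\<in>V - T. A v w > 0 \<and> \<psi> w > 0"
  proof
    fix v assume v: "v \<in> T"
    then obtain C c where Cc: "C \<in> CC" "c \<in> C" "vle G v c" using reach unfolding T_def by blast
    have "v \<noteq> c" using v Cc unfolding T_def by auto
    then have "A v c > 0" using A_vle_pos Cc by blast
    moreover have "c \<in> V - T" using Cc CV unfolding T_def by auto
    moreover have "\<psi> c > 0" using psiC_pos Cc by auto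
    ultimately show "\<exists>w\<in>V - T. A v w > 0 \<and> \<psi> w > 0" by blast
  qed
  obtain l' where l': "l' < lam" "\<forall>v\<in>T. (\<Sum>w\<in>T. A v w * \<psi> w) \<le> l' * \<psi> v"
    using GAP[OF TV Tpos Treach] by blast
  have "\<forall>v\<in>T. Z v = 0" by (rule no_eigvec[OF finT Anon_on Tpos l'(2) l'(1) ZT])
  then have "Z v = 0" for v using ZVT Zout TV unfolding S_def by (cases "v \<in> V") auto
  then show ?thesis unfolding Z_def by (auto simp: fun_eq_iff)
qed

lemma t_le1: assumes C: "C \<in> CC" shows "tC C \<le> 1"
proof -
  have "1 = (\<Sum>v\<in>V. \<Sum>C\<in>CC. tC C * X C v)" using psi_sum decomp by (metis (no_types, lifting))
  also have "\<dots> = (\<Sum>C\<in>CC. tC C * (\<Sum>v\<in>V. X C v))" by (subst sum.swap) (simp add: sum_distrib_left)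
  also have "\<dots> = (\<Sum>C\<in>CC. tC C)" using XC_props unfolding xprop_def by simp
  finally have s1: "(\<Sum>C\<in>CC. tC C) = 1" by simp
  have "tC C \<le> (\<Sum>C\<in>CC. tC C)" using CC_fin C t_prop by (intro member_le_sum) (auto intro: less_imp_le)
  then show ?thesis using s1 by simp
qed

end

context kgpsi begin

lemma X_harm: assumes C: "C \<in> CC" shows "harmonic_vec k G r \<beta> (X C)"
proof -
  have Cc: "C \<in> components G" using CC_comp[OF C] .
  have Xp: "xprop C (X C)" using XC_props[OF C] by auto
  have Xout: "\<And>v. v \<notin> upclosure G C \<Longrightarrow> X C v = 0" using Xp unfolding xprop_def by auto
  have XeigV: "\<And>v. v \<in> V \<Longrightarrow> vapp V A (X C) v = lam * X C v"
    using Xp spec_C_A[OF C] unfolding xprop_def vapp_def by auto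
  have eigi: "\<forall>v\<in>V. (\<Sum>w\<in>V. vmatrix G i v w * X C w) = exp (\<beta> * r i) * X C v" if i: "i \<in> {1..k}" for i
  proof -
    define M where "M = vmatrix G i"
    define U where "U w = vapp V M (X C) w - e i * X C w" for w
    have Uout: "U v = 0" if v: "v \<notin> upclosure G C" for v
    proof -
      have "vapp V M (X C) v = 0" unfolding vapp_def M_def
      proof (intro sum.neutral ballI)
        fix w assume "w \<in> V"
        show "vmatrix G i v w * X C w = 0"
        proof (cases "w \<in> upclosure G C")
          case True then show ?thesis using M_row_out[OF v True] by simp
        qed (simp add: Xout)
      qed
      then show ?thesis unfolding U_def using Xout[OF v] by simp
    qed
    have UC: "U v = 0" if v: "v \<in> C" for v
    proof -
      obtain t where t: "\<forall>w\<in>C. \<psi> w = t * X C w" "t > 0" using t_prop[OF C] by blast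
      have "vapp V M (X C) v = (\<Sum>w\<in>C. M v w * X C w)" unfolding vapp_def
      proof (rule sum_restrict)
        show "C \<subseteq> V" using comp_V[OF Cc] .
        show "\<forall>w\<in>V - C. M v w * X C w = 0"
        proof
          fix w assume w: "w \<in> V - C"
          show "M v w * X C w = 0"
          proof (cases "w \<in> upclosure G C")
            case True then show ?thesis using M_row_C[OF Cc v True] w unfolding M_def by simp
          qed (simp add: Xout)
        qed
      qed
      also have "\<dots> = (\<Sum>w\<in>C. M v w * \<psi> w) / t" using t by (simp add: sum_divide_distrib)
      also have "\<dots> = e i * \<psi> v / t" using psiC_M[OF C i] v unfolding M_def by simp
      also have "\<dots> = e i * X C v" using t v by simp
      finally show ?thesis unfolding U_def by simp
    qed
    have Ueig: "vapp V A U v = lam * U v" if v: "v \<in> V" for v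
    proof -
      have "vapp V A U v = vapp V A (vapp V M (X C)) v - e i * vapp V A (X C) v"
        unfolding U_def by (simp add: vapp_diff vapp_scale)
      also have "vapp V A (vapp V M (X C)) v = vapp V M (vapp V A (X C)) v"
        using comm_A[OF i] v unfolding comm_def M_def by auto
      also have "\<dots> = vapp V M (\<lambda>w. lam * X C w) v" using XeigV by (intro vapp_cong) auto
      also have "\<dots> = lam * vapp V M (X C) v" by (rule vapp_scale)
      finally show ?thesis using XeigV[OF v] unfolding U_def by (simp add: algebra_simps)
    qed
    define D where "D = upclosure G C - C"
    have DV: "D \<subseteq> V" unfolding D_def using up_V by auto
    have UD: "\<forall>v\<in>D. U v = 0"
    proof (cases "D = {}")
      case True then show ?thesis by simp
    next
      case False
      obtain l' where l': "l' < lam" "\<forall>v\<in>D. (\<Sum>w\<in>D. A v w * \<psi> w) \<le> l' * \<psi> v"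
        using gapC[OF C] unfolding D_def by blast
      have finD: "finite D" using DV finV finite_subset by blast
      have Dpos: "\<forall>v\<in>D. \<psi> v > 0" using up_S[OF C] unfolding D_def S_def by auto
      have "\<forall>v\<in>D. (\<Sum>w\<in>D. A v w * U w) = lam * U v"
      proof
        fix v assume v: "v \<in> D"
        have "(\<Sum>w\<in>V. A v w * U w) = (\<Sum>w\<in>D. A v w * U w)"
          using DV UC Uout unfolding D_def by (intro sum_restrict) auto
        then show "(\<Sum>w\<in>D. A v w * U w) = lam * U v" using Ueig[of v] v DV unfolding vapp_def by auto
      qed
      from no_eigvec[OF finD Anon_on Dpos l'(2) l'(1) this] show ?thesis .
    qed
    have "U v = 0" for v using UD UC Uout unfolding D_def by blast
    then show ?thesis unfolding U_def vapp_def M_def e_def by simp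
  qed
  show ?thesis unfolding harmonic_vec_def using Xp eigi unfolding xprop_def by auto
qed

lemma uniq:
  assumes H: "\<forall>C\<in>CC'. F_harmonic k G F C" and T: "\<forall>C\<in>CC'. t' C \<in> {0<..1}"
    and eq: "\<psi> = (\<lambda>v. \<Sum>C\<in>CC'. t' C * X C v)"
  shows "CC' = CC \<and> (\<forall>C\<in>CC. t' C = tC C)"
proof -
  have fin': "finite CC'" using fin_components H unfolding F_harmonic_def by (metis rev_finite_subset subsetI)
  define K where "K = CC \<union> CC'"
  have finK: "finite K" unfolding K_def using CC_fin fin' by simp
  have HK: "\<forall>C\<in>K. F_harmonic k G F C" unfolding K_def using H CC_harm by auto
  define s where "s C = (if C \<in> CC then tC C else 0) - (if C \<in> CC' then t' C else 0)" for C
  have z: "(\<Sum>C\<in>K. s C * X C v) = 0" for v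
  proof -
    have "(\<Sum>C\<in>K. s C * X C v) = (\<Sum>C\<in>K. (if C \<in> CC then tC C * X C v else 0)) - (\<Sum>C\<in>K. (if C \<in> CC' then t' C * X C v else 0))"
    proof -
      have "(\<Sum>C\<in>K. s C * X C v) = (\<Sum>C\<in>K. (if C \<in> CC then tC C * X C v else 0) - (if C \<in> CC' then t' C * X C v else 0))"
        unfolding s_def by (intro sum.cong refl) (auto simp: algebra_simps)
      then show ?thesis by (simp only: sum_subtractf)
    qed
    also have "(\<Sum>C\<in>K. (if C \<in> CC then tC C * X C v else 0)) = (\<Sum>C\<in>K \<inter> CC. tC C * X C v)"
      by (rule sum.inter_restrict[OF finK, symmetric])
    also have "K \<inter> CC = CC" unfolding K_def by auto
    also have "(\<Sum>C\<in>K. (if C \<in> CC' then t' C * X C v else 0)) = (\<Sum>C\<in>K \<inter> CC'. t' C * X C v)"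
      by (rule sum.inter_restrict[OF finK, symmetric])
    also have "K \<inter> CC' = CC'" unfolding K_def by auto
    finally show ?thesis using decomp eq by (metis (no_types, lifting) diff_self)
  qed
  have s0: "\<forall>C\<in>K. s C = 0" by (rule lin_indep[OF finK HK z])
  have "CC \<subseteq> CC'"
  proof
    fix C assume C: "C \<in> CC"
    show "C \<in> CC'"
    proof (rule ccontr)
      assume "C \<notin> CC'"
      then have "s C = tC C" unfolding s_def using C by simp
      then show False using s0 C t_prop[OF C] unfolding K_def by auto
    qed
  qed
  moreover have "CC' \<subseteq> CC"
  proof
    fix C assume C: "C \<in> CC'"
    show "C \<in> CC"
    proof (rule ccontr)
      assume "C \<notin> CC"
      then have "s C = - t' C" unfolding s_def using C by simp
      then show False using s0 C T unfolding K_def by auto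
    qed
  qed
  ultimately have "CC' = CC" by blast
  moreover have "\<forall>C\<in>CC. t' C = tC C" using s0 \<open>CC' = CC\<close> unfolding s_def K_def by auto
  ultimately show ?thesis by blast
qed

end

theorem proposition7p9:
  fixes k :: nat and G :: "'a kgraph" and r :: "nat \<Rightarrow> real" and \<beta> :: real
    and \<psi> :: "'a \<Rightarrow> real" and F :: "(nat \<Rightarrow> nat) list"
  assumes "is_kgraph k G" and "finite_kgraph k G" and "no_sources k G"
    and "harmonic_vec k G r \<beta> \<psi>"
    and "well_chosen k G F"
  shows "\<exists>\<C> t.
      (\<forall>C\<in>\<C>. F_harmonic k G F C) \<and> (\<forall>C\<in>\<C>. t C \<in> {0<..1}) \<and>
      \<psi> = (\<lambda>v. \<Sum>C\<in>\<C>. t C * xFC k G F C v) \<and>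
      (\<forall>\<C>' t'. (\<forall>C\<in>\<C>'. F_harmonic k G F C) \<and> (\<forall>C\<in>\<C>'. t' C \<in> {0<..1}) \<and>
               \<psi> = (\<lambda>v. \<Sum>C\<in>\<C>'. t' C * xFC k G F C v)
               \<longrightarrow> \<C>' = \<C> \<and> (\<forall>C\<in>\<C>. t' C = t C)) \<and>
      (\<forall>C\<in>\<C>. positive_comp k G C \<and>
               (\<forall>C'\<in>\<C> - {C}. \<not> comp_le G C C') \<and>
               (\<forall>i\<in>{1..k}. \<beta> * r i = ln (spec_rad C (vmatrix G i))) \<and>
               harmonic_vec k G r \<beta> (xFC k G F C))"
proof -
  interpret kgpsi k G F r \<beta> \<psi>
    using assms by (unfold_locales) auto
  show ?thesis
  proof (intro exI[of _ CC] exI[of _ tC] conjI allI impI ballI)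
    show "\<And>C. C \<in> CC \<Longrightarrow> F_harmonic k G F C" by (rule CC_harm)
    show "\<And>C. C \<in> CC \<Longrightarrow> tC C \<in> {0<..1}" using t_prop t_le1 by auto
    show "\<psi> = (\<lambda>v. \<Sum>C\<in>CC. tC C * xFC k G F C v)" by (rule decomp)
    show "\<And>CC' t'. (\<forall>C\<in>CC'. F_harmonic k G F C) \<and> (\<forall>C\<in>CC'. t' C \<in> {0<..1}) \<and>
               \<psi> = (\<lambda>v. \<Sum>C\<in>CC'. t' C * xFC k G F C v) \<Longrightarrow> CC' = CC"
      using uniq by blast
    show "\<And>CC' t' C. (\<forall>C\<in>CC'. F_harmonic k G F C) \<and> (\<forall>C\<in>CC'. t' C \<in> {0<..1}) \<and>
               \<psi> = (\<lambda>v. \<Sum>C\<in>CC'. t' C * xFC k G F C v) \<Longrightarrow> C \<in> CC \<Longrightarrow> t' C = tC C"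
      using uniq by blast
    show "\<And>C. C \<in> CC \<Longrightarrow> positive_comp k G C"
      unfolding positive_comp_def using spec_C_M unfolding e_def by auto
    show "\<And>C C'. C \<in> CC \<Longrightarrow> C' \<in> CC - {C} \<Longrightarrow> \<not> comp_le G C C'"
      using max_CC by blast
    show "\<And>C i. C \<in> CC \<Longrightarrow> i \<in> {1..k} \<Longrightarrow> \<beta> * r i = ln (spec_rad C (vmatrix G i))"
      using spec_C_M unfolding e_def by auto
    show "\<And>C. C \<in> CC \<Longrightarrow> harmonic_vec k G r \<beta> (xFC k G F C)" by (rule X_harm)
  qed
qed

end
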